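(* Fix $l^0_{jk},l^0_{ki},l^0_{ij}>0$ and let $\mathcal{W}^{ijk}$ be the set of $(w_i,w_j,w_k)\in\mathbb{R}^3$ for which $l_{ab}>0$ defined by $\cosh\frac{l_{ab}}{2}=e^{w_a+w_b}\cosh\frac{l^0_{ab}}{2}$ exist for $ab\in\{jk,ki,ij\}$. For $(w_i,w_j,w_k)\in\mathcal{W}^{ijk}$, let $\theta^i_{jk},\theta^j_{ki},\theta^k_{ij}$ be the lengths of the sides opposite to the sides of lengths $l_{jk},l_{ki},l_{ij}$ in the hyperbolic right-angled hexagon whose three pairwise non-adjacent sides have lengths $l_{jk},l_{ki},l_{ij}$. Then the Jacobian matrix $\frac{\partial(\theta^i_{jk},\theta^j_{ki},\theta^k_{ij})}{\partial(w_i,w_j,w_k)}$ is negative definite.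
   Context: For any three positive numbers there is a hyperbolic right-angled hexagon, unique up to isometry, whose three pairwise non-adjacent sides have these lengths. *)

theory Defs
  imports "HOL-Analysis.Analysis"
begin

definition mink :: "real^3 \<Rightarrow> real^3 \<Rightarrow> real" where
  "mink x y = x$1 * y$1 + x$2 * y$2 - x$3 * y$3"

definition hyp_point :: "real^3 \<Rightarrow> bool" where
  "hyp_point p \<longleftrightarrow> mink p p = -1 \<and> p$3 > 0"

definition hdist :: "real^3 \<Rightarrow> real^3 \<Rightarrow> real" where
  "hdist p q = arcosh (- mink p q)"

text \<open>Tangent vector at v pointing towards u (projection of u onto the tangent plane at v).\<close>
definition tangent_towards :: "real^3 \<Rightarrow> real^3 \<Rightarrow> real^3" where
  "tangent_towards v u = u + mink u v *\<^sub>R v"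

definition right_angle_at :: "real^3 \<Rightarrow> real^3 \<Rightarrow> real^3 \<Rightarrow> bool" where
  "right_angle_at v u w \<longleftrightarrow> mink (tangent_towards v u) (tangent_towards v w) = 0"

text \<open>Determinant of three vectors; its sign tells on which side of the geodesic
  through p and q (the plane spanned by p, q) the point x lies.\<close>
definition det3 :: "real^3 \<Rightarrow> real^3 \<Rightarrow> real^3 \<Rightarrow> real" where
  "det3 p q x = p$1 * (q$2 * x$3 - q$3 * x$2) - p$2 * (q$1 * x$3 - q$3 * x$1)
              + p$3 * (q$1 * x$2 - q$2 * x$1)"

text \<open>Convexity: all other
  vertices lie strictly on the same side of the line through each side (with a common
  orientation).\<close>
definition right_angled_hexagon :: "(nat \<Rightarrow> real^3) \<Rightarrow> bool" where
  "right_angled_hexagon v \<longleftrightarrow>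
     (\<forall>i<6. hyp_point (v i)) \<and>
     (\<forall>i<6. v i \<noteq> v ((i + 1) mod 6)) \<and>
     (\<forall>i<6. right_angle_at (v i) (v ((i + 5) mod 6)) (v ((i + 1) mod 6))) \<and>
     (\<exists>s\<in>{1, -1::real}. \<forall>i<6. \<forall>j<6. j \<noteq> i \<and> j \<noteq> (i + 1) mod 6 \<longrightarrow>
          s * det3 (v i) (v ((i + 1) mod 6)) (v j) > 0)"

definition hex_side :: "(nat \<Rightarrow> real^3) \<Rightarrow> nat \<Rightarrow> real" where
  "hex_side v i = hdist (v i) (v ((i + 1) mod 6))"

text \<open>Well defined by existence and uniqueness up to isometry of such hexagons.\<close>
definition hex_opposite :: "real \<Rightarrow> real \<Rightarrow> real \<Rightarrow> real \<times> real \<times> real" where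
  "hex_opposite a1 a2 a3 = (THE t. \<exists>v. right_angled_hexagon v \<and>
      hex_side v 0 = a1 \<and> hex_side v 2 = a2 \<and> hex_side v 4 = a3 \<and>
      t = (hex_side v 3, hex_side v 5, hex_side v 1))"

text \<open>Coordinates: w$1 = w_i, w$2 = w_j, w$3 = w_k.\<close>

text \<open>l_ab > 0 with cosh (l_ab/2) = exp (w_a + w_b) * cosh (l0_ab/2) exists iff the RHS exceeds 1.\<close>
definition W_set :: "real \<Rightarrow> real \<Rightarrow> real \<Rightarrow> (real^3) set" where
  "W_set l0jk l0ki l0ij = {w. exp (w$2 + w$3) * cosh (l0jk / 2) > 1 \<and>
                             exp (w$3 + w$1) * cosh (l0ki / 2) > 1 \<and>
                             exp (w$1 + w$2) * cosh (l0ij / 2) > 1}"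

definition new_len :: "real \<Rightarrow> real \<Rightarrow> real \<Rightarrow> real" where
  "new_len l0 wa wb = 2 * arcosh (exp (wa + wb) * cosh (l0 / 2))"

definition theta_map :: "real \<Rightarrow> real \<Rightarrow> real \<Rightarrow> real^3 \<Rightarrow> real^3" where
  "theta_map l0jk l0ki l0ij w =
     (let t = hex_opposite (new_len l0jk (w$2) (w$3)) (new_len l0ki (w$3) (w$1))
                           (new_len l0ij (w$1) (w$2))
      in vector [fst t, fst (snd t), snd (snd t)])"

end

theory Submission
  imports Defs
begin

definition lcross :: "real^3 \<Rightarrow> real^3 \<Rightarrow> real^3" where
  "lcross a b = vector [a$2*b$3 - a$3*b$2, a$3*b$1 - a$1*b$3, a$2*b$1 - a$1*b$2]"

lemma lcross_comp [simp]:
  "lcross a b $ 1 = a$2*b$3 - a$3*b$2"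
  "lcross a b $ 2 = a$3*b$1 - a$1*b$3"
  "lcross a b $ 3 = a$2*b$1 - a$1*b$2"
  by (simp_all add: lcross_def)

lemma vec3_eqI: "x$1 = y$1 \<Longrightarrow> x$2 = y$2 \<Longrightarrow> x$3 = (y::real^3)$3 \<Longrightarrow> x = y"
  by (simp add: vec_eq_iff forall_3)

lemma mink_sym: "mink a b = mink b a" by (simp add: mink_def mult.commute)
lemma mink_scaleR_left [simp]: "mink (r *\<^sub>R a) b = r * mink a b" by (simp add: mink_def algebra_simps)
lemma mink_scaleR_right [simp]: "mink a (r *\<^sub>R b) = r * mink a b" by (simp add: mink_def algebra_simps)
lemma mink_add_left [simp]: "mink (a + c) b = mink a b + mink c b" by (simp add: mink_def algebra_simps)
lemma mink_add_right [simp]: "mink a (b + c) = mink a b + mink a c" by (simp add: mink_def algebra_simps)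
lemma mink_diff_left [simp]: "mink (a - c) b = mink a b - mink c b" by (simp add: mink_def algebra_simps)
lemma mink_diff_right [simp]: "mink a (b - c) = mink a b - mink a c" by (simp add: mink_def algebra_simps)
lemma mink_neg_left [simp]: "mink (- a) b = - mink a b" by (simp add: mink_def algebra_simps)
lemma mink_neg_right [simp]: "mink a (- b) = - mink a b" by (simp add: mink_def algebra_simps)

lemma mink_lcross: "mink (lcross a b) c = det3 a b c"
  by (simp add: mink_def det3_def algebra_simps)
lemma mink_lcross': "mink c (lcross a b) = det3 a b c"
  by (simp add: mink_def det3_def algebra_simps)
lemma det3_cyc: "det3 a b c = det3 b c a"
  by (simp add: det3_def algebra_simps)
lemma det3_swap: "det3 a b c = - det3 b a c"
  by (simp add: det3_def algebra_simps)
lemma det3_aac [simp]: "det3 a a c = 0" by (simp add: det3_def algebra_simps)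
lemma det3_aba [simp]: "det3 a b a = 0" by (simp add: det3_def algebra_simps)
lemma det3_abb [simp]: "det3 a b b = 0" by (simp add: det3_def algebra_simps)
lemma det3_scaleR1 [simp]: "det3 (r *\<^sub>R a) b c = r * det3 a b c" by (simp add: det3_def algebra_simps)
lemma det3_scaleR2 [simp]: "det3 a (r *\<^sub>R b) c = r * det3 a b c" by (simp add: det3_def algebra_simps)
lemma det3_scaleR3 [simp]: "det3 a b (r *\<^sub>R c) = r * det3 a b c" by (simp add: det3_def algebra_simps)
lemma lcross_scaleR1 [simp]: "lcross (r *\<^sub>R a) b = r *\<^sub>R lcross a b" by (rule vec3_eqI) (simp_all add: algebra_simps)
lemma lcross_scaleR2 [simp]: "lcross a (r *\<^sub>R b) = r *\<^sub>R lcross a b" by (rule vec3_eqI) (simp_all add: algebra_simps)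
lemma lcross_anti: "lcross a b = - lcross b a" by (rule vec3_eqI) (simp_all add: algebra_simps)

lemma mink_lcross_lcross:
  "mink (lcross a b) (lcross c d) = mink a d * mink b c - mink a c * mink b d"
  by (simp add: mink_def algebra_simps)

lemma lcross_lcross_left:
  "lcross (lcross a b) c = mink b c *\<^sub>R a - mink a c *\<^sub>R b"
  by (rule vec3_eqI) (simp_all add: mink_def algebra_simps)

lemma lcross_lcross_right:
  "lcross c (lcross a b) = mink a c *\<^sub>R b - mink b c *\<^sub>R a"
  by (rule vec3_eqI) (simp_all add: mink_def algebra_simps)

lemma dual_expand:
  "det3 a b c *\<^sub>R x = mink x a *\<^sub>R lcross b c + mink x b *\<^sub>R lcross c a + mink x c *\<^sub>R lcross a b"
  by (rule vec3_eqI) (simp_all add: mink_def det3_def algebra_simps)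

lemma hyp_point_3: "hyp_point p \<Longrightarrow> (p$3)^2 = 1 + (p$1)^2 + (p$2)^2"
  by (simp add: hyp_point_def mink_def power2_eq_square)

lemma rev_cs:
  assumes p: "hyp_point p" and q: "hyp_point q"
  shows "- mink p q \<ge> 1" and "- mink p q = 1 \<Longrightarrow> p = q"
proof -
  define a where "a = (p$1)^2 + (p$2)^2"
  define b where "b = (q$1)^2 + (q$2)^2"
  define c where "c = p$1*q$1 + p$2*q$2"
  have p3: "(p$3)^2 = 1 + a" and q3: "(q$3)^2 = 1 + b"
    using hyp_point_3[OF p] hyp_point_3[OF q] by (simp_all add: a_def b_def)
  have pp: "p$3 > 0" "q$3 > 0" using p q by (auto simp: hyp_point_def)
  have e1: "a + b - 2*c = (p$1 - q$1)^2 + (p$2 - q$2)^2"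
    by (simp add: a_def b_def c_def power2_eq_square algebra_simps)
  have e2: "a*b - c^2 = (p$1*q$2 - p$2*q$1)^2"
    by (simp add: a_def b_def c_def power2_eq_square algebra_simps)
  have "(p$3*q$3)^2 = (1+a)*(1+b)" by (simp add: power_mult_distrib p3 q3)
  then have sq: "(p$3 * q$3)^2 - (1 + c)^2 = (a + b - 2*c) + (a*b - c^2)"
    by (simp add: power2_eq_square algebra_simps)
  have nn: "(a + b - 2*c) \<ge> 0" "a*b - c^2 \<ge> 0" unfolding e1 e2 by simp_all
  have mk: "- mink p q = p$3*q$3 - c" by (simp add: mink_def c_def)
  have pos: "p$3*q$3 > 0" using pp by simp
  have ge: "p$3*q$3 \<ge> 1 + c"
  proof (cases "1 + c \<le> 0")
    case True then show ?thesis using pos by linarith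
  next
    case False
    have "(1+c)^2 \<le> (p$3*q$3)^2" using sq nn by linarith
    then show ?thesis using False pos by (meson abs_le_square_iff abs_of_pos le_less not_le power2_le_imp_le)
  qed
  then show "- mink p q \<ge> 1" using mk by linarith
  assume eq: "- mink p q = 1"
  then have "p$3*q$3 = 1 + c" using mk by linarith
  then have "(p$3 * q$3)^2 - (1 + c)^2 = 0" by simp
  then have "a + b - 2*c = 0" using sq nn by linarith
  then have x1: "p$1 = q$1" and x2: "p$2 = q$2" unfolding e1
    by (simp_all add: sum_power2_eq_zero_iff)
  then have "a = b" by (simp add: a_def b_def)
  then have "(p$3)^2 = (q$3)^2" using p3 q3 by simp
  then have "p$3 = q$3" using pp by (simp add: power2_eq_iff)
  then show "p = q" using x1 x2 by (intro vec3_eqI) auto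
qed

lemma quad_lemma:
  fixes p0 p1 p2 p3 :: "real^3"
  assumes h: "mink p0 p0 = -1" "mink p1 p1 = -1" "mink p2 p2 = -1" "mink p3 p3 = -1"
    and g: "mink p0 p1 = -x0" "mink p1 p2 = -x1" "mink p2 p3 = -x2"
       "mink p0 p2 = -(x0*x1)" "mink p1 p3 = -(x1*x2)"
    and x: "x0 > 1" "x1 > 1" "x2 > 1"
    and d: "det3 p0 p1 p2 * det3 p1 p2 p3 > 0"
  shows "mink (lcross p0 p1) (lcross p2 p3) = - (x1 * sqrt (x0^2-1) * sqrt (x2^2-1))"
proof -
  define N where "N = lcross p1 p2"
  define u where "u = lcross p0 p1"
  define w where "w = lcross p2 p3"
  define D1 where "D1 = det3 p0 p1 p2"
  define D2 where "D2 = det3 p1 p2 p3"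
  define y0 where "y0 = sqrt (x0^2-1)"
  define y1 where "y1 = sqrt (x1^2-1)"
  define y2 where "y2 = sqrt (x2^2-1)"
  have y0: "y0 > 0" "y0^2 = x0^2 - 1" using x by (simp_all add: y0_def)
  have y1: "y1 > 0" "y1^2 = x1^2 - 1" using x by (simp_all add: y1_def)
  have y2: "y2 > 0" "y2^2 = x2^2 - 1" using x by (simp_all add: y2_def)
  have NN: "mink N N = y1^2"
    unfolding N_def mink_lcross_lcross using h g y1 by (simp add: power2_eq_square mink_sym)
  have eu: "y1^2 *\<^sub>R u = D1 *\<^sub>R lcross N p1"
  proof -
    have "det3 p1 p2 N *\<^sub>R u = mink u p1 *\<^sub>R lcross p2 N + mink u p2 *\<^sub>R lcross N p1 + mink u N *\<^sub>R lcross p1 p2"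
      by (rule dual_expand)
    moreover have "det3 p1 p2 N = y1^2" using NN by (simp add: N_def mink_lcross)
    moreover have "mink u p1 = 0" by (simp add: u_def mink_lcross)
    moreover have "mink u p2 = D1" by (simp add: u_def mink_lcross D1_def)
    moreover have "mink u N = 0" unfolding u_def N_def mink_lcross_lcross using h g by simp
    ultimately show ?thesis by simp
  qed
  have ew: "y1^2 *\<^sub>R w = D2 *\<^sub>R lcross p2 N"
  proof -
    have "det3 p1 p2 N *\<^sub>R w = mink w p1 *\<^sub>R lcross p2 N + mink w p2 *\<^sub>R lcross N p1 + mink w N *\<^sub>R lcross p1 p2"
      by (rule dual_expand)
    moreover have "det3 p1 p2 N = y1^2" using NN by (simp add: N_def mink_lcross)
    moreover have "mink w p1 = D2" by (simp add: w_def mink_lcross D2_def det3_cyc[of p1])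
    moreover have "mink w p2 = 0" by (simp add: w_def mink_lcross)
    moreover have "mink w N = 0" unfolding w_def N_def mink_lcross_lcross using h g by (simp add: mink_sym)
    ultimately show ?thesis by simp
  qed
  have Np1: "mink N p1 = 0" "mink N p2 = 0" by (simp_all add: N_def mink_lcross)
  have k1: "mink (lcross N p1) (lcross p2 N) = - x1 * y1^2"
    unfolding mink_lcross_lcross using NN Np1 g by (simp add: mink_sym)
  have k2: "mink (lcross N p1) (lcross N p1) = y1^2"
    unfolding mink_lcross_lcross using NN Np1 h by (simp add: mink_sym)
  have k3: "mink (lcross p2 N) (lcross p2 N) = y1^2"
    unfolding mink_lcross_lcross using NN Np1 h by (simp add: mink_sym)
  have uu: "mink u u = y0^2" unfolding u_def mink_lcross_lcross using h g y0
    by (simp add: mink_sym power2_eq_square)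
  have ww: "mink w w = y2^2" unfolding w_def mink_lcross_lcross using h g y2
    by (simp add: mink_sym power2_eq_square)
  have "mink (y1^2 *\<^sub>R u) (y1^2 *\<^sub>R u) = D1^2 * y1^2"
    unfolding eu using k2 by (simp add: power2_eq_square)
  then have "y1^2 * y1^2 * y0^2 = D1^2 * y1^2" using uu by simp
  then have "y1^2 * (D1^2 - y0^2 * y1^2) = 0" by (simp add: algebra_simps)
  moreover have "y1^2 \<noteq> 0" using y1(1) by simp
  ultimately have D1sq: "D1^2 = y0^2 * y1^2" by (metis mult_eq_0_iff eq_iff_diff_eq_0)
  have "mink (y1^2 *\<^sub>R w) (y1^2 *\<^sub>R w) = D2^2 * y1^2"
    unfolding ew using k3 by (simp add: power2_eq_square)
  then have "y1^2 * y1^2 * y2^2 = D2^2 * y1^2" using ww by simp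
  then have "y1^2 * (D2^2 - y2^2 * y1^2) = 0" by (simp add: algebra_simps)
  moreover have "y1^2 \<noteq> 0" using y1(1) by simp
  ultimately have D2sq: "D2^2 = y2^2 * y1^2" by (metis mult_eq_0_iff eq_iff_diff_eq_0)
  have "(D1*D2)^2 = (y0*y1*y1*y2)^2" using D1sq D2sq by (simp add: power_mult_distrib)
  moreover have "D1*D2 > 0" using d by (simp add: D1_def D2_def)
  moreover have "y0*y1*y1*y2 > 0" using y0 y1 y2 by simp
  ultimately have DD: "D1*D2 = y0*y1*y1*y2" by (simp add: power2_eq_iff)
  have "mink (y1^2 *\<^sub>R u) (y1^2 *\<^sub>R w) = D1*D2* (- x1 * y1^2)"
    unfolding eu ew using k1 by simp
  then have "y1^2*y1^2 * mink u w = y1^2 * (- x1 * y0 * y2) * y1^2"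
    using DD by (simp add: power2_eq_square algebra_simps)
  moreover have "y1^2 \<noteq> 0" using y1(1) by simp
  ultimately have "y1^2 * (y1^2 * (mink u w + x1*y0*y2)) = 0 \<and> y1^2 \<noteq> 0"
    by (simp add: algebra_simps)
  then have "mink u w = - x1 * y0 * y2" by (auto simp add: eq_neg_iff_add_eq_0)
  then show ?thesis by (simp add: u_def w_def y0_def y2_def)
qed

lemma hex_law:
  fixes a b c d e :: "real^3"
  assumes n: "mink a a = y1^2" "mink b b = y2^2" "mink c c = y3^2" "mink d d = y4^2" "mink e e = y5^2"
    and o: "mink a b = 0" "mink b c = 0" "mink c d = 0" "mink d e = 0"
    and g: "mink a c = -(x2*y1*y3)" "mink c e = -(x4*y3*y5)" "mink e a = -(x0*y5*y1)"
       "mink b d = -(x3*y2*y4)"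
    and y: "y1 > 0" "y2 > 0" "y3 > 0" "y4 > 0" "y5 > 0"
    and yx: "y2^2 = x2^2 - 1" "y4^2 = x4^2 - 1"
    and x: "x3 > 0" "x0 + x2*x4 > 0"
  shows "x3 * y2 * y4 = x2 * x4 + x0"
proof -
  define K where "K = lcross a c"
  define L where "L = lcross c e"
  define kk where "kk = y1^2*y2^2*y3^2"
  define ll where "ll = y3^2*y4^2*y5^2"
  have KK: "mink K K = kk"
  proof -
    have "mink K K = (x2*y1*y3)^2 - y1^2*y3^2" unfolding K_def mink_lcross_lcross
      using n g by (simp add: mink_sym power2_eq_square)
    also have "\<dots> = kk" unfolding kk_def yx(1) by (simp add: power_mult_distrib algebra_simps)
    finally show ?thesis .
  qed
  have LL: "mink L L = ll"
  proof -
    have "mink L L = (x4*y3*y5)^2 - y3^2*y5^2" unfolding L_def mink_lcross_lcross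
      using n g by (simp add: mink_sym power2_eq_square)
    also have "\<dots> = ll" unfolding ll_def yx(2) by (simp add: power_mult_distrib algebra_simps)
    finally show ?thesis .
  qed
  have eb: "kk *\<^sub>R b = mink b K *\<^sub>R K"
  proof -
    have "det3 a c K *\<^sub>R b = mink b a *\<^sub>R lcross c K + mink b c *\<^sub>R lcross K a + mink b K *\<^sub>R lcross a c"
      by (rule dual_expand)
    moreover have "det3 a c K = kk" using KK by (simp add: K_def mink_lcross)
    ultimately show ?thesis using o by (simp add: mink_sym K_def)
  qed
  have ed: "ll *\<^sub>R d = mink d L *\<^sub>R L"
  proof -
    have "det3 c e L *\<^sub>R d = mink d c *\<^sub>R lcross e L + mink d e *\<^sub>R lcross L c + mink d L *\<^sub>R lcross c e"
      by (rule dual_expand)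
    moreover have "det3 c e L = ll" using LL by (simp add: L_def mink_lcross)
    ultimately show ?thesis using o by (simp add: mink_sym L_def)
  qed
  define \<beta> where "\<beta> = mink b K"
  define \<delta> where "\<delta> = mink d L"
  have KL: "mink K L = - (y1*y3^2*y5*(x0 + x2*x4))"
    unfolding K_def L_def mink_lcross_lcross using n g
    by (simp add: mink_sym power2_eq_square algebra_simps)
  have kpos: "kk > 0" "ll > 0" using y by (simp_all add: kk_def ll_def)
  have "mink (kk *\<^sub>R b) (kk *\<^sub>R b) = \<beta>^2 * kk" unfolding eb \<beta>_def using KK
    by (simp add: power2_eq_square)
  then have "kk * (kk * y2^2 - \<beta>^2) = 0" using n by (simp add: algebra_simps power2_eq_square)
  then have bsq: "\<beta>^2 = kk * y2^2" using kpos by simp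
  have "mink (ll *\<^sub>R d) (ll *\<^sub>R d) = \<delta>^2 * ll" unfolding ed \<delta>_def using LL
    by (simp add: power2_eq_square)
  then have "ll * (ll * y4^2 - \<delta>^2) = 0" using n by (simp add: algebra_simps power2_eq_square)
  then have dsq: "\<delta>^2 = ll * y4^2" using kpos by simp
  have "mink (kk *\<^sub>R b) (ll *\<^sub>R d) = \<beta> * \<delta> * mink K L" unfolding eb ed \<beta>_def \<delta>_def by simp
  then have main: "kk * ll * (x3*y2*y4) = \<beta> * \<delta> * (y1*y3^2*y5*(x0 + x2*x4))"
    using g KL by (simp add: ac_simps)
  have "kk * ll * (x3*y2*y4) > 0" using kpos x y by simp
  then have bd: "\<beta> * \<delta> > 0" using main y x
    by (smt (verit, best) mult_nonpos_nonneg mult_pos_pos zero_less_power)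
  have "(\<beta>*\<delta>)^2 = (y1*y2^2*y3^2*y4^2*y5)^2" unfolding power_mult_distrib bsq dsq kk_def ll_def
    by (simp add: power2_eq_square algebra_simps)
  then have "\<beta>*\<delta> = y1*y2^2*y3^2*y4^2*y5 \<or> \<beta>*\<delta> = -(y1*y2^2*y3^2*y4^2*y5)"
    by (simp add: power2_eq_iff)
  moreover have "y1*y2^2*y3^2*y4^2*y5 > 0" using y by simp
  ultimately have bd2: "\<beta>*\<delta> = y1*y2^2*y3^2*y4^2*y5" using bd by linarith
  have "kk * ll * (x3*y2*y4) = (y1*y2^2*y3^2*y4^2*y5) * (y1*y3^2*y5*(x0 + x2*x4))"
    using main bd2 by simp
  then have "(y1^2*y2^2*y3^4*y4^2*y5^2) * (x3*y2*y4 - (x2*x4 + x0)) = 0"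
    unfolding kk_def ll_def by (simp add: power2_eq_square power4_eq_xxxx algebra_simps)
  moreover have "y1^2*y2^2*y3^4*y4^2*y5^2 \<noteq> 0" using y by simp
  ultimately show ?thesis by simp
qed

lemma hex_gen:
  fixes P :: "nat \<Rightarrow> real^3" and x :: "nat \<Rightarrow> real"
  assumes h: "\<And>k. mink (P k) (P k) = -1"
   and g1: "\<And>k. mink (P k) (P (Suc k)) = - x k"
   and g2: "\<And>k. mink (P k) (P (Suc (Suc k))) = -(x k * x (Suc k))"
   and xg: "\<And>k. x k > 1"
   and dd: "\<And>k. det3 (P k) (P (Suc k)) (P (Suc (Suc k))) * det3 (P (Suc k)) (P (Suc(Suc k))) (P (Suc(Suc(Suc k)))) > 0"
   and per: "\<And>k. P (k+6) = P k" "\<And>k. x (k+6) = x k"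
  shows "x 3 * sqrt((x 2)^2-1) * sqrt((x 4)^2-1) = x 2 * x 4 + x 0"
proof -
  define y where "y k = sqrt ((x k)^2 - 1)" for k
  have y: "y k > 0" "(y k)^2 = (x k)^2 - 1" for k using xg[of k] by (simp_all add: y_def)
  define N where "N k = lcross (P k) (P (Suc k))" for k
  have NN: "mink (N k) (N k) = (y k)^2" for k
    unfolding N_def mink_lcross_lcross using h g1 y by (simp add: mink_sym power2_eq_square)
  have NO: "mink (N k) (N (Suc k)) = 0" for k
    unfolding N_def mink_lcross_lcross using h g1 g2 by (simp add: mink_sym)
  have NQ: "mink (N k) (N (Suc (Suc k))) = - (x (Suc k) * y k * y (Suc (Suc k)))" for k
    unfolding N_def y_def
    by (rule quad_lemma[OF h h h h g1 g1 g1 g2 g2 xg xg xg dd])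
  have Q1: "mink (N 1) (N 3) = -(x 2 * y 1 * y 3)" using NQ[of 1] by (simp add: numeral_eq_Suc)
  have Q2: "mink (N 3) (N 5) = -(x 4 * y 3 * y 5)" using NQ[of 3] by (simp add: numeral_eq_Suc)
  have Q4: "mink (N 2) (N 4) = -(x 3 * y 2 * y 4)" using NQ[of 2] by (simp add: numeral_eq_Suc)
  have N7: "N 7 = N 1" using per(1)[of 1] per(1)[of 2] by (simp add: N_def numeral_eq_Suc)
  have x6: "x 6 = x 0" "y 7 = y 1" using per(2)[of 0] per(2)[of 1] by (simp_all add: y_def)
  have Q3: "mink (N 5) (N 1) = -(x 0 * y 5 * y 1)"
    using NQ[of 5] N7 x6 by (simp add: numeral_eq_Suc)
  have "x 3 * y 2 * y 4 = x 2 * x 4 + x 0"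
  proof (rule hex_law)
    show "mink (N 1) (N 1) = (y 1)^2" "mink (N 2) (N 2) = (y 2)^2" "mink (N 3) (N 3) = (y 3)^2"
      "mink (N 4) (N 4) = (y 4)^2" "mink (N 5) (N 5) = (y 5)^2" using NN by auto
    show "mink (N 1) (N 2) = 0" "mink (N 2) (N 3) = 0" "mink (N 3) (N 4) = 0" "mink (N 4) (N 5) = 0"
      using NO[of 1] NO[of 2] NO[of 3] NO[of 4] by (simp_all add: numeral_eq_Suc)
    show "mink (N 1) (N 3) = -(x 2 * y 1 * y 3)" "mink (N 3) (N 5) = -(x 4 * y 3 * y 5)"
      "mink (N 5) (N 1) = -(x 0 * y 5 * y 1)" "mink (N 2) (N 4) = -(x 3 * y 2 * y 4)"
      using Q1 Q2 Q3 Q4 by auto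
    show "y 1 > 0" "y 2 > 0" "y 3 > 0" "y 4 > 0" "y 5 > 0" using y by auto
    show "(y 2)^2 = (x 2)^2 - 1" "(y 4)^2 = (x 4)^2 - 1" using y by auto
    show "x 3 > 0" using xg[of 3] by simp
    show "x 0 + x 2 * x 4 > 0" using xg[of 0] xg[of 2] xg[of 4]
      by (smt (verit) mult_pos_pos)
  qed
  then show ?thesis by (simp add: y_def)
qed

lemma right_angle_eq:
  assumes "mink v v = -1"
  shows "right_angle_at v u w \<longleftrightarrow> mink u w + mink u v * mink w v = 0"
  using assms unfolding right_angle_at_def tangent_towards_def
  by (simp add: mink_sym algebra_simps)

lemma mod6_facts:
  "(k mod 6 + 1) mod 6 = Suc k mod 6"
  "(Suc k mod 6 + 5) mod 6 = k mod 6"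
  "(Suc k mod 6 + 1) mod 6 = Suc (Suc k) mod 6"
  "(k + 6) mod 6 = k mod 6"
  by presburger+

lemma hex_laws:
  assumes hx: "right_angled_hexagon v"
  defines "X \<equiv> \<lambda>k. - mink (v (k mod 6)) (v (Suc k mod 6))"
  shows "\<And>k. X k > 1"
    and "X 3 * sqrt((X 2)^2-1) * sqrt((X 4)^2-1) = X 2 * X 4 + X 0"
    and "X 5 * sqrt((X 4)^2-1) * sqrt((X 0)^2-1) = X 4 * X 0 + X 2"
    and "X 1 * sqrt((X 0)^2-1) * sqrt((X 2)^2-1) = X 0 * X 2 + X 4"
proof -
  define P where "P k = v (k mod 6)" for k
  have hp: "hyp_point (P k)" for k using hx unfolding right_angled_hexagon_def P_def by simp
  have h: "mink (P k) (P k) = -1" for k using hp[of k] by (simp add: hyp_point_def)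
  have g1: "mink (P k) (P (Suc k)) = - X k" for k by (simp add: P_def X_def)
  have ne: "P k \<noteq> P (Suc k)" for k
  proof -
    have "v (k mod 6) \<noteq> v ((k mod 6 + 1) mod 6)"
      using hx unfolding right_angled_hexagon_def by simp
    then show ?thesis unfolding P_def mod6_facts .
  qed
  show xg: "X k > 1" for k
  proof -
    have "X k \<ge> 1" "X k \<noteq> 1" using rev_cs[OF hp[of k] hp[of "Suc k"]] ne[of k] g1[of k] by auto
    then show ?thesis by simp
  qed
  have g2: "mink (P k) (P (Suc (Suc k))) = -(X k * X (Suc k))" for k
  proof -
    have "right_angle_at (v (Suc k mod 6)) (v ((Suc k mod 6 + 5) mod 6)) (v ((Suc k mod 6 + 1) mod 6))"
      using hx unfolding right_angled_hexagon_def by simp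
    then have "right_angle_at (P (Suc k)) (P k) (P (Suc (Suc k)))"
      unfolding mod6_facts P_def .
    then have "mink (P k) (P (Suc (Suc k))) + mink (P k) (P (Suc k)) * mink (P (Suc (Suc k))) (P (Suc k)) = 0"
      using right_angle_eq h by blast
    then show ?thesis using g1[of k] g1[of "Suc k"] by (simp add: mink_sym)
  qed
  obtain s where s: "s \<in> {1, -1::real}" and cv: "\<And>i j. i<6 \<Longrightarrow> j<6 \<Longrightarrow> j \<noteq> i \<Longrightarrow> j \<noteq> (i + 1) mod 6 \<Longrightarrow>
          s * det3 (v i) (v ((i + 1) mod 6)) (v j) > 0"
    using hx unfolding right_angled_hexagon_def by blast
  have cv2: "s * det3 (P k) (P (Suc k)) (P (Suc (Suc k))) > 0" for k
  proof -
    have "Suc (Suc k) mod 6 \<noteq> k mod 6" "Suc (Suc k) mod 6 \<noteq> (k mod 6 + 1) mod 6" by presburger+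
    then have "s * det3 (v (k mod 6)) (v ((k mod 6 + 1) mod 6)) (v (Suc (Suc k) mod 6)) > 0"
      by (intro cv) auto
    then show ?thesis unfolding mod6_facts P_def .
  qed
  have dd: "det3 (P k) (P (Suc k)) (P (Suc (Suc k))) * det3 (P (Suc k)) (P (Suc(Suc k))) (P (Suc(Suc(Suc k)))) > 0" for k
  proof -
    have "s = 1 \<or> s = -1" using s by auto
    then show ?thesis
    proof
      assume "s = 1" then show ?thesis using cv2[of k] cv2[of "Suc k"] by simp
    next
      assume "s = -1" then show ?thesis using cv2[of k] cv2[of "Suc k"]
        by (simp add: mult_neg_neg)
    qed
  qed
  have per: "P (k+6) = P k" "X (k+6) = X k" for k
  proof -
    have "Suc (k+6) mod 6 = Suc k mod 6" by presburger
    then show "P (k+6) = P k" "X (k+6) = X k" by (simp_all add: P_def X_def mod6_facts(4))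
  qed
  have gen: "X (3+m) * sqrt((X (2+m))^2-1) * sqrt((X (4+m))^2-1) = X (2+m) * X (4+m) + X (0+m)" for m
    apply (rule hex_gen[where P="\<lambda>k. P (k+m)" and x="\<lambda>k. X (k+m)"])
    subgoal for k by (rule h)
    subgoal for k using g1[of "k+m"] by simp
    subgoal for k using g2[of "k+m"] by simp
    subgoal for k by (rule xg)
    subgoal for k using dd[of "k+m"] by simp
    subgoal for k using per(1)[of "k+m"] by (simp add: ac_simps)
    subgoal for k using per(2)[of "k+m"] by (simp add: ac_simps)
    done
  show "X 3 * sqrt((X 2)^2-1) * sqrt((X 4)^2-1) = X 2 * X 4 + X 0"
    using gen[of 0] by simp
  show "X 5 * sqrt((X 4)^2-1) * sqrt((X 0)^2-1) = X 4 * X 0 + X 2"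
  proof -
    have e: "(3::nat)+2 = 5" "(2::nat)+2 = 4" "(4::nat)+2 = 6" "(0::nat)+2 = 2" "X 6 = X 0"
      using per(2)[of 0] by simp_all
    show ?thesis using gen[of 2] unfolding e .
  qed
  show "X 1 * sqrt((X 0)^2-1) * sqrt((X 2)^2-1) = X 0 * X 2 + X 4"
  proof -
    have e: "(3::nat)+4 = 7" "(2::nat)+4 = 6" "(4::nat)+4 = 8" "(0::nat)+4 = 4" "X 6 = X 0"
      "X 7 = X 1" "X 8 = X 2"
      using per(2)[of 0] per(2)[of 1] per(2)[of 2] by simp_all
    show ?thesis using gen[of 4] unfolding e .
  qed
qed

lemma det3_lc3: "det3 a b (lcross c d) = mink (lcross a b) (lcross c d)" by (simp add: mink_lcross)
lemma det3_lc1: "det3 (lcross c d) a b = mink (lcross a b) (lcross c d)"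
  by (simp add: mink_def det3_def algebra_simps)
lemma det3_lc2: "det3 a (lcross c d) b = mink (lcross b a) (lcross c d)"
  by (simp add: mink_def det3_def algebra_simps)

lemma det3_cyc2: "det3 b c a = det3 a b c" by (simp add: det3_def algebra_simps)

lemma conv_identity:
  "det3 (lcross a b) (lcross b c) (lcross d e) = - det3 a b c * det3 d e b"
proof -
  have "lcross (lcross a b) (lcross b c) = - det3 a b c *\<^sub>R b"
    unfolding lcross_lcross_left by (simp add: mink_lcross' det3_cyc2)
  then show ?thesis by (simp add: mink_lcross[symmetric] mink_lcross')
qed

lemma gen_normals:
  fixes u1 u3 u5 :: "real^3"
  assumes m: "mink u1 u1 = 1" "mink u3 u3 = 1" "mink u5 u5 = 1"
    "mink u1 u3 = -A2" "mink u3 u5 = -A3" "mink u5 u1 = -A1"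
    and B: "B1 > 0" "B2 > 0" "B3 > 0" "B1^2 = A1^2 - 1" "B2^2 = A2^2 - 1" "B3^2 = A3^2 - 1"
    and D: "det3 u1 u3 u5 = D"
  defines "n0 \<equiv> (1/B1) *\<^sub>R lcross u5 u1"
    and "n2 \<equiv> (1/B2) *\<^sub>R lcross u1 u3"
    and "n4 \<equiv> (1/B3) *\<^sub>R lcross u3 u5"
  shows "mink n0 n0 = 1" "mink n0 u1 = 0" "mink u5 n0 = 0" "mink u1 n2 = 0"
    "mink n0 n2 = - ((A1*A2+A3)/(B1*B2))"
    "det3 u5 n0 u1 = -B1"
    "det3 u1 n2 n0 = D/(B1*B2)"
    "det3 n2 u3 n0 = A2*D/(B1*B2)"
    "det3 u3 n4 n0 = A3*D/(B1*B3)"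
    "det3 n4 u5 n0 = D/(B1*B3)"
    "det3 n0 u1 n2 = D/(B1*B2)"
    "det3 n2 u3 u1 = -B2"
    "det3 u3 n4 u1 = -(A1+A2*A3)/B3"
    "det3 n4 u5 u1 = -(A1*A3+A2)/B3"
proof -
  have ms: "mink u3 u1 = -A2" "mink u5 u3 = -A3" "mink u1 u5 = -A1" using m by (simp_all add: mink_sym)
  have Ds: "det3 u3 u5 u1 = D" "det3 u5 u1 u3 = D" "det3 u3 u1 u5 = -D" "det3 u1 u5 u3 = -D"
    "det3 u5 u3 u1 = -D"
    using D by (simp_all add: det3_def algebra_simps)
  note S = mink_lcross[of _ _ u1] mink_lcross[of _ _ u3] mink_lcross[of _ _ u5]
     mink_lcross'[of u1] mink_lcross'[of u3] mink_lcross'[of u5] det3_lc1 det3_lc2 det3_lc3 mink_lcross_lcross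
     lcross_lcross_left lcross_lcross_right m ms Ds D
  have b: "B1 \<noteq> 0" "B2 \<noteq> 0" "B3 \<noteq> 0" using B by auto
  show "mink n0 n0 = 1" unfolding n0_def using B(4) b by (simp add: S power2_eq_square field_simps)
  show "mink n0 u1 = 0" unfolding n0_def by (simp add: S)
  show "mink u5 n0 = 0" unfolding n0_def by (simp add: S)
  show "mink u1 n2 = 0" unfolding n2_def by (simp add: S)
  show "mink n0 n2 = - ((A1*A2+A3)/(B1*B2))" unfolding n0_def n2_def using b
    by (simp add: S field_simps)
  show "det3 u5 n0 u1 = -B1" unfolding n0_def using B(4) b by (simp add: S power2_eq_square field_simps)
  show "det3 u1 n2 n0 = D/(B1*B2)" unfolding n0_def n2_def using b by (simp add: S field_simps)
  show "det3 n2 u3 n0 = A2*D/(B1*B2)" unfolding n0_def n2_def using b by (simp add: S field_simps)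
  show "det3 u3 n4 n0 = A3*D/(B1*B3)" unfolding n0_def n4_def using b by (simp add: S field_simps)
  show "det3 n4 u5 n0 = D/(B1*B3)" unfolding n0_def n4_def using b by (simp add: S field_simps)
  show "det3 n0 u1 n2 = D/(B1*B2)" unfolding n0_def n2_def using b by (simp add: S field_simps)
  show "det3 n2 u3 u1 = -B2" unfolding n2_def using B(5) b by (simp add: S power2_eq_square field_simps)
  show "det3 u3 n4 u1 = -(A1+A2*A3)/B3" unfolding n4_def using b by (simp add: S field_simps)
  show "det3 n4 u5 u1 = -(A1*A3+A2)/B3" unfolding n4_def using b by (simp add: S field_simps)
qed

definition nn :: "real^3 \<Rightarrow> real^3 \<Rightarrow> real^3 \<Rightarrow> real \<Rightarrow> real \<Rightarrow> real \<Rightarrow> nat \<Rightarrow> real^3" where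
  "nn u1 u3 u5 B1 B2 B3 k = (let r = k mod 6 in
     if r = 0 then (1/B1) *\<^sub>R lcross u5 u1 else if r = 1 then u1 else
     if r = 2 then (1/B2) *\<^sub>R lcross u1 u3 else if r = 3 then u3 else
     if r = 4 then (1/B3) *\<^sub>R lcross u3 u5 else u5)"

definition XX :: "real \<Rightarrow> real \<Rightarrow> real \<Rightarrow> real \<Rightarrow> real \<Rightarrow> real \<Rightarrow> nat \<Rightarrow> real" where
  "XX A1 A2 A3 B1 B2 B3 k = (let r = k mod 6 in
     if r = 0 then A1 else if r = 1 then (A1*A2+A3)/(B1*B2) else
     if r = 2 then A2 else if r = 3 then (A2*A3+A1)/(B2*B3) else
     if r = 4 then A3 else (A3*A1+A2)/(B3*B1))"

lemma mod6_cases: "(k::nat) mod 6 = 0 \<or> k mod 6 = 1 \<or> k mod 6 = 2 \<or> k mod 6 = 3 \<or> k mod 6 = 4 \<or> k mod 6 = 5"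
  by presburger

lemma mod6_shift2: "((k::nat) + 2) mod 6 = (if k mod 6 < 4 then k mod 6 + 2 else k mod 6 - 4)"
  by presburger

lemma nn_rot: "nn p q r s t w k = nn r p q w s t (k+2)"
  using mod6_cases[of k] unfolding nn_def Let_def mod6_shift2 by auto

lemma XX_rot: "XX a b c x y z k = XX c a b z x y (k+2)"
  using mod6_cases[of k] unfolding XX_def Let_def mod6_shift2 by (auto simp: ac_simps)

lemma nn_per: "nn u1 u3 u5 B1 B2 B3 (k+6) = nn u1 u3 u5 B1 B2 B3 k"
  unfolding nn_def by simp
lemma XX_per: "XX A1 A2 A3 B1 B2 B3 (k+6) = XX A1 A2 A3 B1 B2 B3 k"
  unfolding XX_def by simp

definition goodk :: "(nat \<Rightarrow> real^3) \<Rightarrow> (nat \<Rightarrow> real) \<Rightarrow> real \<Rightarrow> nat \<Rightarrow> bool" where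
  "goodk n X D k \<longleftrightarrow> mink (n k) (n k) = 1 \<and> mink (n k) (n (Suc k)) = 0 \<and>
     mink (n k) (n (k+2)) = - X (Suc k) \<and>
     (\<forall>j\<in>{2,3,4,5}. det3 (lcross (n (k+5)) (n k)) (lcross (n (k+6)) (n (Suc k)))
                        (lcross (n (k+j+5)) (n (k+j))) * D > 0)"

lemma goodk_shift:
  assumes "goodk (\<lambda>k. n (k+m)) (\<lambda>k. X (k+m)) D k"
  shows "goodk n X D (k+m)"
  using assms unfolding goodk_def by (simp add: ac_simps)

lemma goodk_per:
  assumes "goodk n X D k" "\<And>k. n (k+6) = n k" "\<And>k. X (k+6) = X k"
  shows "goodk n X D (k+6)"
proof -
  have "goodk (\<lambda>k. n (k+6)) (\<lambda>k. X (k+6)) D k" using assms by simp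
  then show ?thesis by (rule goodk_shift)
qed

locale gcfg =
  fixes u1 u3 u5 :: "real^3" and A1 A2 A3 B1 B2 B3 D :: real
  assumes m: "mink u1 u1 = 1" "mink u3 u3 = 1" "mink u5 u5 = 1"
    "mink u1 u3 = -A2" "mink u3 u5 = -A3" "mink u5 u1 = -A1"
    and B: "B1 > 0" "B2 > 0" "B3 > 0" "B1^2 = A1^2 - 1" "B2^2 = A2^2 - 1" "B3^2 = A3^2 - 1"
    and A: "A1 > 0" "A2 > 0" "A3 > 0"
    and D: "det3 u1 u3 u5 = D" "D \<noteq> 0"
begin

lemma base01:
  assumes "k < 2"
  shows "goodk (nn u1 u3 u5 B1 B2 B3) (XX A1 A2 A3 B1 B2 B3) D k"
proof -
  note gn = gen_normals[OF m B(1-6) D(1)]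
  define n0 where "n0 = (1/B1) *\<^sub>R lcross u5 u1"
  define n2 where "n2 = (1/B2) *\<^sub>R lcross u1 u3"
  define n4 where "n4 = (1/B3) *\<^sub>R lcross u3 u5"
  note gn' = gn[folded n0_def n2_def n4_def]
  have nv: "nn u1 u3 u5 B1 B2 B3 0 = n0" "nn u1 u3 u5 B1 B2 B3 1 = u1"
    "nn u1 u3 u5 B1 B2 B3 2 = n2" "nn u1 u3 u5 B1 B2 B3 3 = u3"
    "nn u1 u3 u5 B1 B2 B3 4 = n4" "nn u1 u3 u5 B1 B2 B3 5 = u5"
    "nn u1 u3 u5 B1 B2 B3 6 = n0" "nn u1 u3 u5 B1 B2 B3 7 = u1"
    "nn u1 u3 u5 B1 B2 B3 8 = n2" "nn u1 u3 u5 B1 B2 B3 9 = u3"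
    "nn u1 u3 u5 B1 B2 B3 10 = n4" "nn u1 u3 u5 B1 B2 B3 11 = u5"
    "nn u1 u3 u5 B1 B2 B3 (Suc 0) = u1" "nn u1 u3 u5 B1 B2 B3 (Suc 1) = n2"
    "nn u1 u3 u5 B1 B2 B3 (Suc (Suc 0)) = n2" "nn u1 u3 u5 B1 B2 B3 (Suc (Suc (Suc 0))) = u3"
    by (simp_all add: nn_def n0_def n2_def n4_def)
  have xv: "XX A1 A2 A3 B1 B2 B3 1 = (A1*A2+A3)/(B1*B2)" "XX A1 A2 A3 B1 B2 B3 2 = A2"
    by (simp_all add: XX_def)
  have pos: "D*D > 0" using D(2) by (auto simp add: zero_less_mult_iff linorder_neq_iff)
  have Bp: "B1 > 0" "B2 > 0" "B3 > 0" using B by auto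
  have ci: "det3 (lcross a b) (lcross b c) (lcross d e) * D = - det3 a b c * det3 d e b * D" for a b c d e
    by (simp add: conv_identity)
  consider "k = 0" | "k = 1" using assms by linarith
  then show ?thesis
  proof cases
    case 1
    show ?thesis unfolding goodk_def 1
      using gn' Bp pos A by (simp add: nv xv ci mult_pos_pos) (simp add: nv XX_def field_simps mult_pos_pos)
  next
    case 2
    show ?thesis unfolding goodk_def 2
      using gn' Bp pos A m by (simp add: nv xv ci) (simp add: nv XX_def field_simps mult_pos_pos,
        use mult_pos_pos[OF A(1) pos] mult_pos_pos[OF A(2) pos]
        mult_pos_pos[OF A(2) mult_pos_pos[OF A(3) pos]] mult_pos_pos[OF A(1) mult_pos_pos[OF A(3) pos]] in linarith)
  qed
qed

lemma rot: "gcfg u3 u5 u1 A2 A3 A1 B2 B3 B1 D"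
  using m B A D by unfold_locales (simp_all add: det3_cyc[of u1])

lemma all_good: "goodk (nn u1 u3 u5 B1 B2 B3) (XX A1 A2 A3 B1 B2 B3) D k"
proof -
  interpret r1: gcfg u3 u5 u1 A2 A3 A1 B2 B3 B1 D by (rule rot)
  interpret r2: gcfg u5 u1 u3 A3 A1 A2 B3 B1 B2 D by (rule r1.rot)
  have e1: "nn u3 u5 u1 B2 B3 B1 = (\<lambda>k. nn u1 u3 u5 B1 B2 B3 (k+2))"
    by (rule ext) (rule nn_rot)
  have e2: "XX A2 A3 A1 B2 B3 B1 = (\<lambda>k. XX A1 A2 A3 B1 B2 B3 (k+2))"
    by (rule ext) (rule XX_rot)
  have e3: "nn u5 u1 u3 B3 B1 B2 = (\<lambda>k. nn u1 u3 u5 B1 B2 B3 (k+4))"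
    by (rule ext) (simp add: nn_rot[of u5 u1 u3 B3 B1 B2] nn_rot[of u3 u5 u1 B2 B3 B1] numeral_eq_Suc)
  have e4: "XX A3 A1 A2 B3 B1 B2 = (\<lambda>k. XX A1 A2 A3 B1 B2 B3 (k+4))"
    by (rule ext) (simp add: XX_rot[of A3 A1 A2 B3 B1 B2] XX_rot[of A2 A3 A1 B2 B3 B1] numeral_eq_Suc)
  have s1: "goodk (nn u1 u3 u5 B1 B2 B3) (XX A1 A2 A3 B1 B2 B3) D (k+2)" if "k < 2" for k
  proof (rule goodk_shift)
    show "goodk (\<lambda>k. nn u1 u3 u5 B1 B2 B3 (k+2)) (\<lambda>k. XX A1 A2 A3 B1 B2 B3 (k+2)) D k"
      using r1.base01[OF that] unfolding e1 e2 .
  qed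
  have s2: "goodk (nn u1 u3 u5 B1 B2 B3) (XX A1 A2 A3 B1 B2 B3) D (k+4)" if "k < 2" for k
  proof (rule goodk_shift)
    show "goodk (\<lambda>k. nn u1 u3 u5 B1 B2 B3 (k+4)) (\<lambda>k. XX A1 A2 A3 B1 B2 B3 (k+4)) D k"
      using r2.base01[OF that] unfolding e3 e4 .
  qed
  have lt6: "goodk (nn u1 u3 u5 B1 B2 B3) (XX A1 A2 A3 B1 B2 B3) D k" if "k < 6" for k
  proof -
    from that have "k < 2 \<or> k = 2 \<or> k = 3 \<or> k = 4 \<or> k = 5" by arith
    then show ?thesis using base01 s1[of 0] s1[of 1] s2[of 0] s2[of 1] by (auto simp: numeral_eq_Suc)
  qed
  show ?thesis
  proof (induction k rule: less_induct)
    case (less k)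
    show ?case
    proof (cases "k < 6")
      case True then show ?thesis by (rule lt6)
    next
      case False
      then have "k = (k - 6) + 6" by simp
      moreover have "goodk (nn u1 u3 u5 B1 B2 B3) (XX A1 A2 A3 B1 B2 B3) D ((k - 6) + 6)"
        by (rule goodk_per[OF less.IH]) (use False in \<open>simp_all add: nn_per XX_per\<close>)
      ultimately show ?thesis by simp
    qed
  qed
qed

end

lemma same_cone:
  assumes "mink p p = -1" "mink q q = -1" "mink p q < 0"
  shows "p$3 * q$3 > 0"
proof (rule ccontr)
  assume nc: "\<not> p$3 * q$3 > 0"
  define a where "a = (p$1)^2 + (p$2)^2"
  define b where "b = (q$1)^2 + (q$2)^2"
  define c where "c = p$1*q$1 + p$2*q$2"
  have p3: "(p$3)^2 = 1 + a" and q3: "(q$3)^2 = 1 + b"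
    using assms(1,2) by (simp_all add: a_def b_def mink_def power2_eq_square)
  have "a*b - c^2 = (p$1*q$2 - p$2*q$1)^2"
    by (simp add: a_def b_def c_def power2_eq_square algebra_simps)
  then have abc: "c^2 \<le> a*b" by (smt (verit) zero_le_power2)
  have ab: "a \<ge> 0" "b \<ge> 0" by (simp_all add: a_def b_def)
  have "(p$3*q$3)^2 = (1+a)*(1+b)" by (simp add: power_mult_distrib p3 q3)
  moreover have "(1+a)*(1+b) = 1 + a + b + a*b" by (simp add: algebra_simps)
  ultimately have "(p$3*q$3)^2 > c^2" using abc ab by linarith
  then have "\<bar>p$3*q$3\<bar> > \<bar>c\<bar>" using abs_le_square_iff[of "p$3*q$3" c] by linarith
  then have "c - p$3*q$3 > 0" using nc by linarith
  moreover have "mink p q = c - p$3*q$3" by (simp add: mink_def c_def)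
  ultimately show False using assms(3) by simp
qed

lemma hex_from_good:
  fixes n :: "nat \<Rightarrow> real^3" and X :: "nat \<Rightarrow> real"
  assumes good: "\<And>k. goodk n X D k" and nper: "\<And>k. n (k+6) = n k" and Xper: "\<And>k. X (k+6) = X k"
    and X1: "\<And>k. X k > 1" and D: "D \<noteq> 0"
  shows "\<exists>v. right_angled_hexagon v \<and> (\<forall>i<6. hex_side v i = arcosh (X i))"
proof -
  define Q where "Q k = lcross (n (k+5)) (n k)" for k
  have g1: "mink (n k) (n k) = 1" "mink (n k) (n (Suc k)) = 0" "mink (n k) (n (k+2)) = - X (Suc k)"
    "\<And>j. j \<in> {2,3,4,5} \<Longrightarrow> det3 (lcross (n (k+5)) (n k)) (lcross (n (k+6)) (n (Suc k)))
                        (lcross (n (k+j+5)) (n (k+j))) * D > 0" for k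
    using good[of k] unfolding goodk_def by blast+
  have n6: "n (k+6) = n k" "n (k+7) = n (Suc k)" "n (6+k) = n k" "n (7+k) = n (Suc k)" for k
    using nper[of k] nper[of "Suc k"] by (simp_all add: add.commute)
  have x6: "X (k+6) = X k" "X (6+k) = X k" for k using Xper[of k] by (simp_all add: add.commute)
  have Qper: "Q (k+6) = Q k" for k unfolding Q_def using nper[of "k+5"] nper[of k] by (simp add: ac_simps)
  have Qmod: "Q (k mod 6) = Q k" for k
  proof -
    have "Q (k mod 6 + 6*m) = Q (k mod 6)" for m by (induction m) (simp_all, metis Qper add.assoc add.commute)
    then show ?thesis by (metis mod_mult_div_eq mult.commute)
  qed
  have QQ: "mink (Q k) (Q k) = -1" for k
    unfolding Q_def mink_lcross_lcross using g1(1)[of "k+5"] g1(2)[of "k+5"] g1(1)[of k] n6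
    by (simp add: mink_sym)
  have Q1: "mink (Q k) (Q (Suc k)) = - X k" for k
    unfolding Q_def mink_lcross_lcross using g1(1)[of k] g1(2)[of "k+5"] g1(3)[of "k+5"] g1(2)[of k] n6 x6
    by (simp add: mink_sym ac_simps)
  have Q2: "mink (Q k) (Q (Suc (Suc k))) = - (X k * X (Suc k))" for k
    unfolding Q_def mink_lcross_lcross using g1(3)[of "k+5"] g1(2)[of k] g1(3)[of k] n6 x6
    by (simp add: mink_sym ac_simps)
  have Qc: "det3 (Q k) (Q (Suc k)) (Q (k+j)) * D > 0" if "j \<in> {2,3,4,5}" for k j
    using g1(4)[OF that, of k] unfolding Q_def by (simp add: ac_simps)
  have sgn3: "(Q k)$3 * (Q 0)$3 > 0" for k
  proof (induction k)
    case 0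
    have "(Q 0)$3 \<noteq> 0"
    proof
      assume "(Q 0)$3 = 0"
      then have "mink (Q 0) (Q 0) \<ge> 0" by (simp add: mink_def)
      then show False using QQ[of 0] by simp
    qed
    then show ?case by (auto simp add: zero_less_mult_iff linorder_neq_iff)
  next
    case (Suc k)
    have "(Q k)$3 * (Q (Suc k))$3 > 0"
      by (rule same_cone[OF QQ QQ]) (use Q1[of k] X1[of k] in simp)
    then show ?case using Suc.IH by (smt (verit) mult_neg_neg mult_pos_pos zero_less_mult_iff)
  qed
  define \<epsilon> where "\<epsilon> = (if (Q 0)$3 > 0 then 1 else (-1::real))"
  have e2: "\<epsilon> * \<epsilon> = 1" by (simp add: \<epsilon>_def)
  have ep: "\<epsilon> * (Q k)$3 > 0" for k
    using sgn3[of k] by (auto simp: \<epsilon>_def zero_less_mult_iff)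
  define v where "v k = \<epsilon> *\<^sub>R Q k" for k
  have vmod: "v ((i+1) mod 6) = v (Suc i)" "v ((i+5) mod 6) = v (i+5)" for i
    unfolding v_def using Qmod[of "Suc i"] Qmod[of "i+5"] by simp_all
  have vv: "mink (v k) (v k) = -1" for k unfolding v_def using QQ e2 by (simp add: mult.assoc[symmetric])
  have v1: "mink (v k) (v (Suc k)) = - X k" for k unfolding v_def using Q1 e2 by (simp add: mult.assoc[symmetric])
  have v2: "mink (v k) (v (Suc (Suc k))) = - (X k * X (Suc k))" for k
    unfolding v_def using Q2 e2 by (simp add: mult.assoc[symmetric])
  have vper: "v (k+6) = v k" for k unfolding v_def using Qper by simp
  define s where "s = (if \<epsilon> * D > 0 then 1 else (-1::real))"
  have hx: "right_angled_hexagon v"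
    unfolding right_angled_hexagon_def
  proof (intro conjI allI impI)
    fix i :: nat assume "i < 6"
    show "hyp_point (v i)" unfolding hyp_point_def using vv ep by (simp add: v_def)
    show "v i \<noteq> v ((i + 1) mod 6)"
    proof
      assume "v i = v ((i + 1) mod 6)"
      then have "mink (v i) (v (Suc i)) = -1" using vv vmod by simp
      then show False using v1[of i] X1[of i] by simp
    qed
    have e1: "v (Suc (i+5)) = v i" "v (Suc (Suc (i+5))) = v (Suc i)" using vper[of i] vper[of "Suc i"] by (simp_all add: add.commute)
    have "mink (v (i+5)) (v (Suc (Suc (i+5)))) + mink (v (i+5)) (v (Suc (i+5))) * mink (v (Suc (Suc (i+5)))) (v (Suc (i+5))) = 0"
      using v1[of "i+5"] v1[of "Suc (i+5)"] v2[of "i+5"] by (simp add: mink_sym)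
    then show "right_angle_at (v i) (v ((i + 5) mod 6)) (v ((i + 1) mod 6))"
      unfolding e1 vmod using right_angle_eq[OF vv] by blast
  next
    have "\<epsilon> \<noteq> 0" using e2 by auto
    then have "\<epsilon> * D \<noteq> 0" using D by simp
    then have "\<epsilon> * D > 0 \<or> \<epsilon> * D < 0" by linarith
    then have sD: "s * \<epsilon> * D > 0"
    proof
      assume "\<epsilon> * D > 0" then show ?thesis by (simp add: s_def mult.assoc)
    next
      assume a: "\<epsilon> * D < 0" then have "s = -1" by (simp add: s_def)
      then show ?thesis using a by (simp add: mult.assoc)
    qed
    show "\<exists>s\<in>{1, - 1}. \<forall>i<6. \<forall>j<6. j \<noteq> i \<and> j \<noteq> (i + 1) mod 6 \<longrightarrow> 0 < s * det3 (v i) (v ((i + 1) mod 6)) (v j)"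
    proof (intro bexI allI impI)
      fix i j :: nat assume ij: "i < 6" "j < 6" "j \<noteq> i \<and> j \<noteq> (i + 1) mod 6"
      define d where "d = (j + 6 - i) mod 6"
      have "i = 0 \<or> i = 1 \<or> i = 2 \<or> i = 3 \<or> i = 4 \<or> i = 5" using ij by arith
      moreover have "j = 0 \<or> j = 1 \<or> j = 2 \<or> j = 3 \<or> j = 4 \<or> j = 5" using ij by arith
      ultimately have d: "d \<in> {2,3,4,5}" "j = (i+d) mod 6" using ij unfolding d_def by auto
      define T where "T = det3 (Q i) (Q (Suc i)) (Q (i+d))"
      have TD: "T * D > 0" unfolding T_def by (rule Qc[OF d(1)])
      have vj: "v j = \<epsilon> *\<^sub>R Q (i+d)" unfolding v_def d(2) Qmod ..
      have "det3 (v i) (v (Suc i)) (v j) = (\<epsilon>*\<epsilon>)*\<epsilon> * T" unfolding vj by (simp add: v_def T_def)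
      then have dv: "det3 (v i) (v (Suc i)) (v j) = \<epsilon> * T" using e2 by simp
      have "(s * \<epsilon> * D) * (T * D) > 0" using sD TD by simp
      then have "(s * (\<epsilon> * T)) * (D * D) > 0" by (simp add: ac_simps)
      moreover have "D * D > 0" using D by (auto simp: zero_less_mult_iff linorder_neq_iff)
      ultimately have "s * (\<epsilon> * T) > 0" by (simp add: zero_less_mult_iff)
      then show "0 < s * det3 (v i) (v ((i + 1) mod 6)) (v j)" unfolding vmod dv .
    qed (simp add: s_def)
  qed
  moreover have "\<forall>i<6. hex_side v i = arcosh (X i)"
    using v1 vmod by (simp add: hex_side_def hdist_def)
  ultimately show ?thesis by blast
qed

definition Fh :: "real \<Rightarrow> real \<Rightarrow> real \<Rightarrow> real" where
  "Fh a b c = arcosh ((cosh b * cosh c + cosh a) / (sinh b * sinh c))"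

lemma cosh_gt1: "a > 0 \<Longrightarrow> cosh (a::real) > 1"
proof -
  assume "a > 0"
  then have "sinh a > 0" by simp
  then have "(cosh a)^2 > 1" using cosh_square_eq[of a] by (simp add: power2_eq_square)
  moreover have "cosh a \<noteq> 1"
  proof
    assume "cosh a = 1" then show False using \<open>(cosh a)^2 > 1\<close> by simp
  qed
  ultimately show ?thesis using cosh_real_ge_1[of a] by linarith
qed

lemma odd_gt1:
  fixes a b c :: real assumes "a > 0" "b > 0" "c > 0"
  shows "(cosh a * cosh b + cosh c) / (sinh a * sinh b) > 1"
proof -
  have "sinh a < cosh a" "sinh b < cosh b" by (simp_all add: sinh_less_cosh_real)
  moreover have "sinh a > 0" "sinh b > 0" using assms by simp_all
  ultimately have "sinh a * sinh b < cosh a * cosh b" by (simp add: mult_strict_mono)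
  moreover have "cosh c > 0" by simp
  ultimately have "sinh a * sinh b < cosh a * cosh b + cosh c" by linarith
  moreover have "sinh a * sinh b > 0" using \<open>sinh a > 0\<close> \<open>sinh b > 0\<close> by simp
  ultimately show ?thesis by (simp add: less_divide_eq_1_pos)
qed

lemma hex_exists:
  fixes a1 a2 a3 :: real
  assumes a: "a1 > 0" "a2 > 0" "a3 > 0"
  shows "\<exists>v. right_angled_hexagon v \<and> hex_side v 0 = a1 \<and> hex_side v 2 = a2 \<and> hex_side v 4 = a3 \<and>
      (hex_side v 3, hex_side v 5, hex_side v 1) = (Fh a1 a2 a3, Fh a2 a3 a1, Fh a3 a1 a2)"
proof -
  define A1 where "A1 = cosh a1" define A2 where "A2 = cosh a2" define A3 where "A3 = cosh a3"
  define B1 where "B1 = sinh a1" define B2 where "B2 = sinh a2" define B3 where "B3 = sinh a3"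
  have Bp: "B1 > 0" "B2 > 0" "B3 > 0" using a by (simp_all add: B1_def B2_def B3_def)
  have A1': "A1 > 1" "A2 > 1" "A3 > 1" using a cosh_gt1 by (simp_all add: A1_def A2_def A3_def)
  have BA: "B1^2 = A1^2 - 1" "B2^2 = A2^2 - 1" "B3^2 = A3^2 - 1"
    by (simp_all add: A1_def A2_def A3_def B1_def B2_def B3_def sinh_square_eq)
  define \<Delta> where "\<Delta> = sqrt (A1^2 + A2^2 + A3^2 + 2*A1*A2*A3 - 1)"
  have dpos: "A1^2 + A2^2 + A3^2 + 2*A1*A2*A3 - 1 > 0"
  proof -
    have "A1^2 > 1" "A2^2 > 0" "A3^2 > 0" "A1*A2*A3 > 0" using A1' by (simp_all add: one_less_power)
    then show ?thesis by linarith
  qed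
  have dsq: "\<Delta>^2 = A1^2 + A2^2 + A3^2 + 2*A1*A2*A3 - 1" "\<Delta> > 0"
    using dpos by (simp_all add: \<Delta>_def)
  define u1 :: "real^3" where "u1 = vector [1, 0, 0]"
  define u3 :: "real^3" where "u3 = vector [-A2, 0, B2]"
  define u5 :: "real^3" where "u5 = vector [-A1, \<Delta>/B2, (A3+A1*A2)/B2]"
  have m: "mink u1 u1 = 1" "mink u3 u3 = 1" "mink u5 u5 = 1"
    "mink u1 u3 = -A2" "mink u3 u5 = -A3" "mink u5 u1 = -A1"
  proof -
    show "mink u1 u1 = 1" "mink u1 u3 = -A2" "mink u5 u1 = -A1"
      by (simp_all add: u1_def u3_def u5_def mink_def)
    show "mink u3 u3 = 1" using BA by (simp add: u3_def mink_def power2_eq_square)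
    show "mink u3 u5 = -A3" using Bp by (simp add: u3_def u5_def mink_def field_simps)
    have "A1^2 * B2^2 + \<Delta>^2 - (A3+A1*A2)^2 = B2^2"
      unfolding dsq(1) BA by (simp add: power2_eq_square algebra_simps)
    then show "mink u5 u5 = 1" using Bp
      by (simp add: u5_def mink_def power2_eq_square field_simps)
  qed
  have D: "det3 u1 u3 u5 = - \<Delta>" using Bp by (simp add: u1_def u3_def u5_def det3_def)
  interpret gcfg u1 u3 u5 A1 A2 A3 B1 B2 B3 "- \<Delta>"
    using m Bp BA A1' D dsq by unfold_locales auto
  define X where "X = XX A1 A2 A3 B1 B2 B3"
  have X1: "X k > 1" for k
  proof -
    have "(A1*A2+A3)/(B1*B2) > 1" "(A2*A3+A1)/(B2*B3) > 1" "(A3*A1+A2)/(B3*B1) > 1"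
      using odd_gt1 a unfolding A1_def A2_def A3_def B1_def B2_def B3_def by auto
    then show ?thesis using A1' unfolding X_def XX_def Let_def by auto
  qed
  have "\<exists>v. right_angled_hexagon v \<and> (\<forall>i<6. hex_side v i = arcosh (X i))"
  proof (rule hex_from_good)
    show "goodk (nn u1 u3 u5 B1 B2 B3) X (-\<Delta>) k" for k unfolding X_def by (rule all_good)
    show "nn u1 u3 u5 B1 B2 B3 (k+6) = nn u1 u3 u5 B1 B2 B3 k" for k by (rule nn_per)
    show "X (k+6) = X k" for k unfolding X_def by (rule XX_per)
    show "X k > 1" for k by (rule X1)
    show "-\<Delta> \<noteq> 0" using dsq by simp
  qed
  then obtain v where hx: "right_angled_hexagon v" and hs: "\<forall>i<6. hex_side v i = arcosh (X i)"
    by blast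
  have ac: "arcosh (cosh a) = a" if "a > 0" for a :: real using that by (simp add: arcosh_cosh_real)
  show ?thesis
  proof (intro exI conjI)
    show "right_angled_hexagon v" by (rule hx)
    show "hex_side v 0 = a1" "hex_side v 2 = a2" "hex_side v 4 = a3"
      using hs a by (simp_all add: X_def XX_def A1_def A2_def A3_def ac)
    show "(hex_side v 3, hex_side v 5, hex_side v 1) = (Fh a1 a2 a3, Fh a2 a3 a1, Fh a3 a1 a2)"
      using hs by (simp add: X_def XX_def Fh_def A1_def A2_def A3_def B1_def B2_def B3_def ac_simps)
  qed
qed

lemma hex_unique:
  assumes hx: "right_angled_hexagon v" and s: "hex_side v 0 = a1" "hex_side v 2 = a2" "hex_side v 4 = a3"
    and a: "a1 > 0" "a2 > 0" "a3 > 0"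
  shows "(hex_side v 3, hex_side v 5, hex_side v 1) = (Fh a1 a2 a3, Fh a2 a3 a1, Fh a3 a1 a2)"
proof -
  define X where "X = (\<lambda>k. - mink (v (k mod 6)) (v (Suc k mod 6)))"
  have L: "\<And>k. X k > 1"
    "X 3 * sqrt((X 2)^2-1) * sqrt((X 4)^2-1) = X 2 * X 4 + X 0"
    "X 5 * sqrt((X 4)^2-1) * sqrt((X 0)^2-1) = X 4 * X 0 + X 2"
    "X 1 * sqrt((X 0)^2-1) * sqrt((X 2)^2-1) = X 0 * X 2 + X 4"
    using hex_laws[OF hx] unfolding X_def by simp_all
  have hs: "hex_side v k = arcosh (X k)" if "k < 6" for k
  proof -
    have "(k+1) mod 6 = Suc k mod 6" by simp
    then show ?thesis using that by (simp add: hex_side_def hdist_def X_def)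
  qed
  have X1: "X k \<ge> 1" for k using L(1)[of k] by (simp add: X_def)
  have ch: "cosh a1 = X 0" "cosh a2 = X 2" "cosh a3 = X 4"
    using s hs[of 0] hs[of 2] hs[of 4] X1 by auto
  have sh: "sinh a1 = sqrt ((X 0)^2 - 1)" "sinh a2 = sqrt ((X 2)^2 - 1)" "sinh a3 = sqrt ((X 4)^2 - 1)"
    using s hs[of 0] hs[of 2] hs[of 4] X1 by (auto simp: sinh_arcosh_real)
  have sp: "sinh a1 > 0" "sinh a2 > 0" "sinh a3 > 0" using a by simp_all
  have "X 3 = (cosh a2 * cosh a3 + cosh a1) / (sinh a2 * sinh a3)"
    using L(2) sp unfolding ch sh by (simp add: field_simps)
  moreover have "X 5 = (cosh a3 * cosh a1 + cosh a2) / (sinh a3 * sinh a1)"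
    using L(3) sp unfolding ch sh by (simp add: field_simps)
  moreover have "X 1 = (cosh a1 * cosh a2 + cosh a3) / (sinh a1 * sinh a2)"
    using L(4) sp unfolding ch sh by (simp add: field_simps)
  ultimately show ?thesis using hs[of 3] hs[of 5] hs[of 1] by (simp add: Fh_def)
qed

lemma hex_opposite_eq:
  assumes a: "a1 > 0" "a2 > 0" "a3 > 0"
  shows "hex_opposite a1 a2 a3 = (Fh a1 a2 a3, Fh a2 a3 a1, Fh a3 a1 a2)"
  unfolding hex_opposite_def
proof (rule the_equality)
  show "\<exists>v. right_angled_hexagon v \<and> hex_side v 0 = a1 \<and> hex_side v 2 = a2 \<and> hex_side v 4 = a3 \<and>
      (Fh a1 a2 a3, Fh a2 a3 a1, Fh a3 a1 a2) = (hex_side v 3, hex_side v 5, hex_side v 1)"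
    using hex_exists[OF a] by metis
  fix t assume "\<exists>v. right_angled_hexagon v \<and> hex_side v 0 = a1 \<and> hex_side v 2 = a2 \<and> hex_side v 4 = a3 \<and>
      t = (hex_side v 3, hex_side v 5, hex_side v 1)"
  then show "t = (Fh a1 a2 a3, Fh a2 a3 a1, Fh a3 a1 a2)" using hex_unique a by blast
qed

lemma DERIV_cosh_real: "DERIV cosh (x::real) :> sinh x"
  using has_field_derivative_cosh[OF DERIV_ident, of x UNIV] by simp
lemma DERIV_sinh_real: "DERIV sinh (x::real) :> cosh x"
  using has_field_derivative_sinh[OF DERIV_ident, of x UNIV] by simp

lemma Fh_sqrt:
  fixes c1 c2 c3 s2 s3 :: real
  assumes "s2 > 0" "s3 > 0" "s2^2 = c2^2 - 1" "s3^2 = c3^2 - 1"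
  shows "sqrt (((c2*c3 + c1)/(s2 * s3))^2 - 1) = sqrt (c1^2 + c2^2 + c3^2 + 2*c1*c2*c3 - 1) / (s2 * s3)"
proof -
  have "((c2*c3 + c1)/(s2 * s3))^2 - 1 = (c1^2 + c2^2 + c3^2 + 2*c1*c2*c3 - 1) / (s2 * s3)^2"
  proof -
    have "(c2*c3 + c1)^2 - (s2 * s3)^2 = c1^2 + c2^2 + c3^2 + 2*c1*c2*c3 - 1"
      unfolding power_mult_distrib assms(3,4) by (simp add: power2_eq_square algebra_simps)
    then show ?thesis using assms(1,2) by (simp add: field_simps power2_eq_square)
  qed
  then show ?thesis using assms(1,2) by (simp add: real_sqrt_divide)
qed

lemma dFh:
  fixes L1 L2 L3 :: "'a::real_normed_vector \<Rightarrow> real"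
  assumes d: "(L1 has_derivative D1) (at w)" "(L2 has_derivative D2) (at w)" "(L3 has_derivative D3) (at w)"
    and p: "L1 w > 0" "L2 w > 0" "L3 w > 0"
  shows "((\<lambda>x. Fh (L1 x) (L2 x) (L3 x)) has_derivative
    (\<lambda>h. (sinh (L1 w) * D1 h - (cosh (L3 w) + cosh (L1 w) * cosh (L2 w)) / sinh (L2 w) * D2 h
          - (cosh (L2 w) + cosh (L1 w) * cosh (L3 w)) / sinh (L3 w) * D3 h)
         / sqrt ((cosh (L1 w))^2 + (cosh (L2 w))^2 + (cosh (L3 w))^2 + 2 * cosh (L1 w) * cosh (L2 w) * cosh (L3 w) - 1)))
    (at w)"
proof -
  define c1 where "c1 = cosh (L1 w)" define c2 where "c2 = cosh (L2 w)" define c3 where "c3 = cosh (L3 w)"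
  define s1 where "s1 = sinh (L1 w)" define s2 where "s2 = sinh (L2 w)" define s3 where "s3 = sinh (L3 w)"
  have sp: "s1 > 0" "s2 > 0" "s3 > 0" using p by (simp_all add: s1_def s2_def s3_def)
  have sc: "s2^2 = c2^2 - 1" "s3^2 = c3^2 - 1" by (simp_all add: s2_def s3_def c2_def c3_def sinh_square_eq)
  have hc: "((\<lambda>x. cosh (L x)) has_derivative (\<lambda>h. D h * sinh (L w))) (at w)"
    if "(L has_derivative D) (at w)" for L :: "'a \<Rightarrow> real" and D
    by (rule DERIV_compose_FDERIV[OF DERIV_cosh_real[of "L w"] that])
  have hs: "((\<lambda>x. sinh (L x)) has_derivative (\<lambda>h. D h * cosh (L w))) (at w)"
    if "(L has_derivative D) (at w)" for L :: "'a \<Rightarrow> real" and D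
    by (rule DERIV_compose_FDERIV[OF DERIV_sinh_real[of "L w"] that])
  have hN: "((\<lambda>x. cosh (L2 x) * cosh (L3 x) + cosh (L1 x)) has_derivative
      (\<lambda>h. (c2 * (D3 h * s3) + D2 h * s2 * c3) + D1 h * s1)) (at w)"
    unfolding c2_def c3_def s1_def s2_def s3_def
    by (intro has_derivative_add has_derivative_mult hc d)
  have hM: "((\<lambda>x. sinh (L2 x) * sinh (L3 x)) has_derivative
      (\<lambda>h. s2 * (D3 h * c3) + D2 h * c2 * s3)) (at w)"
    unfolding c2_def c3_def s2_def s3_def
    by (intro has_derivative_mult hs d)
  have M0: "s2 * s3 \<noteq> 0" using sp by simp
  have hR: "((\<lambda>x. (cosh (L2 x) * cosh (L3 x) + cosh (L1 x)) / (sinh (L2 x) * sinh (L3 x))) has_derivative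
      (\<lambda>h. (((c2 * (D3 h * s3) + D2 h * s2 * c3) + D1 h * s1) * (s2 * s3) - (c2*c3+c1) * (s2 * (D3 h * c3) + D2 h * c2 * s3))
           / ((s2 * s3) * (s2 * s3)))) (at w)"
    using has_derivative_divide'[OF hN hM] M0 by (simp add: c1_def c2_def c3_def s2_def s3_def)
  define R where "R = (c2*c3 + c1)/(s2 * s3)"
  have R1: "R > 1" unfolding R_def c1_def c2_def c3_def s2_def s3_def by (rule odd_gt1[OF p(2,3,1)])
  have hF: "((\<lambda>x. arcosh ((cosh (L2 x) * cosh (L3 x) + cosh (L1 x)) / (sinh (L2 x) * sinh (L3 x)))) has_derivative
      (\<lambda>h. (((c2 * (D3 h * s3) + D2 h * s2 * c3) + D1 h * s1) * (s2 * s3) - (c2*c3+c1) * (s2 * (D3 h * c3) + D2 h * c2 * s3))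
           / ((s2 * s3) * (s2 * s3)) * (1 / sqrt (R^2 - 1)))) (at w)"
  proof -
    have dA: "(arcosh has_real_derivative (1 / sqrt (R^2-1))) (at ((cosh (L2 w) * cosh (L3 w) + cosh (L1 w)) / (sinh (L2 w) * sinh (L3 w))))"
      using arcosh_real_has_field_derivative[OF R1, of UNIV] by (simp add: R_def c1_def c2_def c3_def s2_def s3_def)
    show ?thesis using DERIV_compose_FDERIV[OF dA hR] by simp
  qed
  define \<Delta> where "\<Delta> = sqrt (c1^2 + c2^2 + c3^2 + 2*c1*c2*c3 - 1)"
  have sq: "sqrt (R^2 - 1) = \<Delta> / (s2 * s3)" unfolding R_def \<Delta>_def by (rule Fh_sqrt[OF sp(2,3) sc])
  have Dp: "\<Delta> > 0"
  proof -
    have "R^2 > 1" using R1 by (simp add: one_less_power)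
    then have "sqrt (R^2 - 1) > 0" by simp
    moreover have "s2 * s3 > 0" using sp by simp
    ultimately show ?thesis using sq by (simp add: zero_less_divide_iff)
  qed
  show ?thesis unfolding Fh_def
  proof (rule has_derivative_eq_rhs[OF hF], rule ext)
    fix h
    show "(((c2 * (D3 h * s3) + D2 h * s2 * c3) + D1 h * s1) * (s2 * s3) - (c2*c3+c1) * (s2 * (D3 h * c3) + D2 h * c2 * s3))
           / ((s2 * s3) * (s2 * s3)) * (1 / sqrt (R^2 - 1)) =
      (sinh (L1 w) * D1 h - (cosh (L3 w) + cosh (L1 w) * cosh (L2 w)) / sinh (L2 w) * D2 h
          - (cosh (L2 w) + cosh (L1 w) * cosh (L3 w)) / sinh (L3 w) * D3 h)
         / sqrt ((cosh (L1 w))^2 + (cosh (L2 w))^2 + (cosh (L3 w))^2 + 2 * cosh (L1 w) * cosh (L2 w) * cosh (L3 w) - 1)"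
    proof -
      define Num where "Num = (((c2 * (D3 h * s3) + D2 h * s2 * c3) + D1 h * s1) * (s2 * s3) - (c2*c3+c1) * (s2 * (D3 h * c3) + D2 h * c2 * s3))"
      define RHS where "RHS = s3 * s2 * s1 * D1 h - s3*(c3+c1*c2)*D2 h - s2*(c2+c1*c3)*D3 h"
      have "Num - RHS = D2 h * s3*c3*(s2^2 - (c2^2 - 1)) + D3 h * s2*c2*(s3^2 - (c3^2-1))"
        unfolding Num_def RHS_def by (simp add: power2_eq_square algebra_simps)
      then have NR: "Num = RHS" using sc by simp
      have "Num / ((s2 * s3) * (s2 * s3)) * (1 / (\<Delta> / (s2 * s3))) = RHS / (s2 * s3 * \<Delta>)"
        unfolding NR using sp Dp by (simp add: field_simps)
      also have "\<dots> = (s1 * D1 h - (c3 + c1 * c2) / s2 * D2 h - (c2 + c1 * c3) / s3 * D3 h) / \<Delta>"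
        unfolding RHS_def using sp Dp by (simp add: field_simps)
      finally show ?thesis unfolding Num_def sq by (simp add: c1_def c2_def c3_def s1_def
        s2_def s3_def \<Delta>_def)
    qed
  qed
qed

lemma quad2:
  fixes P R M x y :: real
  assumes "P > \<bar>M\<bar>" "R > \<bar>M\<bar>"
  shows "P*x^2 + R*y^2 - 2*M*x*y \<ge> (P - \<bar>M\<bar>)*x^2 + (R - \<bar>M\<bar>)*y^2"
proof -
  have "0 \<le> (\<bar>x\<bar> - \<bar>y\<bar>)^2" by simp
  moreover have "(\<bar>x\<bar> - \<bar>y\<bar>)^2 = x^2 + y^2 - 2*\<bar>x*y\<bar>"
    by (simp add: power2_eq_square abs_mult algebra_simps abs_mult_self_eq)
  ultimately have "2*\<bar>x*y\<bar> \<le> x^2 + y^2" by linarith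
  then have "\<bar>M\<bar>*(2*\<bar>x*y\<bar>) \<le> \<bar>M\<bar>*(x^2 + y^2)"
    by (rule mult_left_mono) simp
  moreover have "M*(x*y) \<le> \<bar>M\<bar>*\<bar>x*y\<bar>"
    by (metis abs_ge_self abs_mult)
  ultimately show ?thesis by (simp add: algebra_simps)
qed


lemma group_bound:
  fixes a b c x y :: real
  assumes "a > 1" "b > 1" "c > 1"
  shows "\<exists>e1 e2. e1 > 0 \<and> e2 > 0 \<and>
    (b+a*c)*x^2 + (a+b*c)*y^2 - 2*(c-a-b-1)*x*y \<ge> e1*x^2 + e2*y^2"
proof -
  have h1: "b + a*c > \<bar>c-a-b-1\<bar>"
  proof -
    have "(b+a*c) - (c-a-b-1) = c*(a-1) + a + 2*b + 1" by (simp add: algebra_simps)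
    moreover have "c*(a-1) > 0" using assms by simp
    moreover have "(b+a*c) + (c-a-b-1) = (a+1)*(c-1)" by (simp add: algebra_simps)
    moreover have "(a+1)*(c-1) > 0" using assms by simp
    ultimately show ?thesis using assms unfolding abs_less_iff by linarith
  qed
  have h2: "a + b*c > \<bar>c-a-b-1\<bar>"
  proof -
    have "(a+b*c) - (c-a-b-1) = c*(b-1) + 2*a + b + 1" by (simp add: algebra_simps)
    moreover have "c*(b-1) > 0" using assms by simp
    moreover have "(a+b*c) + (c-a-b-1) = (b+1)*(c-1)" by (simp add: algebra_simps)
    moreover have "(b+1)*(c-1) > 0" using assms by simp
    ultimately show ?thesis using assms unfolding abs_less_iff by linarith
  qed
  show ?thesis using quad2[OF h1 h2, of x y] h1 h2 by (intro exI[of _ "b + a*c - \<bar>c-a-b-1\<bar>"] exI[of _ "a + b*c - \<bar>c-a-b-1\<bar>"]) auto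
qed

lemma id_lemma:
  fixes A B C x1 x2 x3 :: real
  assumes d: "A \<noteq> 0" "B \<noteq> 0" "C \<noteq> 0"
  shows "x1 * (((A+1)+1)*(x2+x3) - ((C+1)+(A+1)*(B+1))/B*(x3+x1) - ((B+1)+(A+1)*(C+1))/C*(x1+x2))
       + x2 * (((B+1)+1)*(x3+x1) - ((A+1)+(B+1)*(C+1))/C*(x1+x2) - ((C+1)+(B+1)*(A+1))/A*(x2+x3))
       + x3 * (((C+1)+1)*(x1+x2) - ((B+1)+(C+1)*(A+1))/A*(x2+x3) - ((A+1)+(C+1)*(B+1))/B*(x3+x1))
       = - ((((B+1)+(A+1)*(C+1))*x1^2 + ((A+1)+(B+1)*(C+1))*x2^2 - 2*((C+1)-(A+1)-(B+1)-1)*x1*x2)/C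
          + (((C+1)+(A+1)*(B+1))*x1^2 + ((A+1)+(C+1)*(B+1))*x3^2 - 2*((B+1)-(A+1)-(C+1)-1)*x1*x3)/B
          + (((C+1)+(B+1)*(A+1))*x2^2 + ((B+1)+(C+1)*(A+1))*x3^2 - 2*((A+1)-(B+1)-(C+1)-1)*x2*x3)/A)"
  using d by (simp add: field_simps power2_eq_square)
lemma main_ineq:
  fixes a b c x1 x2 x3 :: real
  assumes abc: "a > 1" "b > 1" "c > 1" and nz: "x1 \<noteq> 0 \<or> x2 \<noteq> 0 \<or> x3 \<noteq> 0"
  shows "x1 * ((a+1)*(x2+x3) - (c+a*b)/(b-1)*(x3+x1) - (b+a*c)/(c-1)*(x1+x2))
       + x2 * ((b+1)*(x3+x1) - (a+b*c)/(c-1)*(x1+x2) - (c+b*a)/(a-1)*(x2+x3))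
       + x3 * ((c+1)*(x1+x2) - (b+c*a)/(a-1)*(x2+x3) - (a+c*b)/(b-1)*(x3+x1)) < 0"
proof -
  define N3 where "N3 = (b+a*c)*x1^2 + (a+b*c)*x2^2 - 2*(c-a-b-1)*x1*x2"
  define N2 where "N2 = (c+a*b)*x1^2 + (a+c*b)*x3^2 - 2*(b-a-c-1)*x1*x3"
  define N1 where "N1 = (c+b*a)*x2^2 + (b+c*a)*x3^2 - 2*(a-b-c-1)*x2*x3"
  have d: "a - 1 \<noteq> 0" "b - 1 \<noteq> 0" "c - 1 \<noteq> 0" using abc by auto
  have id: "x1 * ((a+1)*(x2+x3) - (c+a*b)/(b-1)*(x3+x1) - (b+a*c)/(c-1)*(x1+x2))
       + x2 * ((b+1)*(x3+x1) - (a+b*c)/(c-1)*(x1+x2) - (c+b*a)/(a-1)*(x2+x3))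
       + x3 * ((c+1)*(x1+x2) - (b+c*a)/(a-1)*(x2+x3) - (a+c*b)/(b-1)*(x3+x1))
       = - (N3/(c-1) + N2/(b-1) + N1/(a-1))"
    unfolding N1_def N2_def N3_def using id_lemma[OF d, of x1 x2 x3] by simp
  obtain e1 e2 where e: "e1 > 0" "e2 > 0" "N3 \<ge> e1*x1^2 + e2*x2^2"
    using group_bound[OF abc, of x1 x2] unfolding N3_def by blast
  obtain f1 f2 where f: "f1 > 0" "f2 > 0" "N2 \<ge> f1*x1^2 + f2*x3^2"
    using group_bound[OF abc(1,3,2), of x1 x3] unfolding N2_def by (auto simp: ac_simps)
  obtain g1 g2 where g: "g1 > 0" "g2 > 0" "N1 \<ge> g1*x2^2 + g2*x3^2"
    using group_bound[OF abc(2,3,1), of x2 x3] unfolding N1_def by (auto simp: ac_simps)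
  have p: "c - 1 > 0" "b - 1 > 0" "a - 1 > 0" using abc by auto
  have q1: "N3/(c-1) \<ge> (e1*x1^2 + e2*x2^2)/(c-1)" using e p by (simp add: divide_right_mono)
  have q2: "N2/(b-1) \<ge> (f1*x1^2 + f2*x3^2)/(b-1)" using f p by (simp add: divide_right_mono)
  have q3: "N1/(a-1) \<ge> (g1*x2^2 + g2*x3^2)/(a-1)" using g p by (simp add: divide_right_mono)
  have r: "(e1*x1^2 + e2*x2^2)/(c-1) \<ge> 0" "(f1*x1^2 + f2*x3^2)/(b-1) \<ge> 0" "(g1*x2^2 + g2*x3^2)/(a-1) \<ge> 0"
    using e f g p by simp_all
  have "(e1*x1^2 + e2*x2^2)/(c-1) > 0 \<or> (f1*x1^2 + f2*x3^2)/(b-1) > 0 \<or> (g1*x2^2 + g2*x3^2)/(a-1) > 0"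
  proof -
    consider "x1 \<noteq> 0" | "x2 \<noteq> 0" | "x3 \<noteq> 0" using nz by blast
    then show ?thesis
    proof cases
      case 1 then have "e1*x1^2 > 0" using e by simp
      then have "e1*x1^2 + e2*x2^2 > 0" using e by (smt (verit) mult_nonneg_nonneg zero_le_power2)
      then show ?thesis using p by simp
    next
      case 2 then have "e2*x2^2 > 0" using e by simp
      then have "e1*x1^2 + e2*x2^2 > 0" using e by (smt (verit) mult_nonneg_nonneg zero_le_power2)
      then show ?thesis using p by simp
    next
      case 3 then have "f2*x3^2 > 0" using f by simp
      then have "f1*x1^2 + f2*x3^2 > 0" using f by (smt (verit) mult_nonneg_nonneg zero_le_power2)
      then show ?thesis using p by simp
    qed
  qed
  then have "N3/(c-1) + N2/(b-1) + N1/(a-1) > 0" using q1 q2 q3 r by linarith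
  then show ?thesis unfolding id by simp
qed

lemma dnl:
  fixes w :: "real^3" and i j :: 3
  assumes y1: "exp (w$i + w$j) * cosh (l0/2) > 1"
  shows "((\<lambda>x. new_len l0 (x$i) (x$j)) has_derivative
     (\<lambda>h. (2 * (exp (w$i + w$j) * cosh (l0/2)) / sqrt ((exp (w$i + w$j) * cosh (l0/2))^2 - 1)) * (h$i + h$j))) (at w)"
proof -
  define y where "y = exp (w$i + w$j) * cosh (l0/2)"
  have lin: "((\<lambda>x. x$i + x$j) has_derivative (\<lambda>h. h$i + h$j)) (at w)"
    by (intro has_derivative_add bounded_linear_imp_has_derivative bounded_linear_vec_nth)
  have ex: "((\<lambda>x. exp (x$i + x$j)) has_derivative (\<lambda>h. (h$i + h$j) * exp (w$i + w$j))) (at w)"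
    by (rule DERIV_compose_FDERIV[OF DERIV_exp lin])
  have g: "((\<lambda>x. exp (x$i + x$j) * cosh (l0/2)) has_derivative (\<lambda>h. (h$i + h$j) * exp (w$i + w$j) * cosh (l0/2))) (at w)"
    by (rule has_derivative_mult_left[OF ex])
  have dA: "(arcosh has_real_derivative (1 / sqrt (y^2-1))) (at (exp (w$i + w$j) * cosh (l0/2)))"
    using arcosh_real_has_field_derivative[OF y1[folded y_def], of UNIV] by (simp add: y_def)
  have a: "((\<lambda>x. arcosh (exp (x$i + x$j) * cosh (l0/2))) has_derivative
      (\<lambda>h. (h$i + h$j) * exp (w$i + w$j) * cosh (l0/2) * (1 / sqrt (y^2-1)))) (at w)"
    by (rule DERIV_compose_FDERIV[OF dA g])
  have b: "((\<lambda>x. 2 * arcosh (exp (x$i + x$j) * cosh (l0/2))) has_derivative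
      (\<lambda>h. 2 * ((h$i + h$j) * exp (w$i + w$j) * cosh (l0/2) * (1 / sqrt (y^2-1))))) (at w)"
    by (rule has_derivative_mult_right[OF a])
  show ?thesis unfolding new_len_def
    by (rule has_derivative_eq_rhs[OF b]) (auto simp: y_def field_simps)
qed

lemma new_len_pos: "exp (wa + wb) * cosh (l0/2) > 1 \<Longrightarrow> new_len l0 wa wb > 0"
  unfolding new_len_def by simp

lemma cosh_new_len: "exp (wa + wb) * cosh (l0/2) > 1 \<Longrightarrow>
   cosh (new_len l0 wa wb) = 2 * (exp (wa + wb) * cosh (l0/2))^2 - 1"
  unfolding new_len_def by (simp add: cosh_double_cosh)

lemma sinh_new_len: "exp (wa + wb) * cosh (l0/2) > 1 \<Longrightarrow>
   sinh (new_len l0 wa wb) = 2 * sqrt ((exp (wa + wb) * cosh (l0/2))^2 - 1) * (exp (wa + wb) * cosh (l0/2))"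
  unfolding new_len_def by (simp add: sinh_double sinh_arcosh_real)

lemma comp_simp:
  fixes y1 y2 y3 u1 u2 u3 :: real
  assumes y: "y1 > 1" "y2 > 1" "y3 > 1"
  defines "c1 \<equiv> 2*y1^2 - 1" and "c2 \<equiv> 2*y2^2 - 1" and "c3 \<equiv> 2*y3^2 - 1"
  shows "2 * sqrt (y1^2 - 1) * y1 * (2 * y1 / sqrt (y1^2 - 1) * u1)
      - (c3 + c1*c2) / (2 * sqrt (y2^2 - 1) * y2) * (2 * y2 / sqrt (y2^2 - 1) * u2)
      - (c2 + c1*c3) / (2 * sqrt (y3^2 - 1) * y3) * (2 * y3 / sqrt (y3^2 - 1) * u3)
    = 2 * ((c1+1)*u1 - (c3+c1*c2)/(c2-1)*u2 - (c2+c1*c3)/(c3-1)*u3)"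
proof -
  have q: "sqrt (y1^2-1) > 0" "sqrt (y2^2-1) > 0" "sqrt (y3^2-1) > 0"
    using y by (simp_all add: one_less_power)
  have qq: "(sqrt (y2^2-1))^2 = y2^2 - 1" "(sqrt (y3^2-1))^2 = y3^2 - 1"
    using y by (simp_all add: one_less_power less_imp_le)
  have t1: "2 * sqrt (y1^2 - 1) * y1 * (2 * y1 / sqrt (y1^2 - 1) * u1) = 2*((c1+1)*u1)"
    using q y unfolding c1_def by (simp add: field_simps power2_eq_square)
  have t2: "X / (2 * sqrt (y^2 - 1) * y) * (2 * y / sqrt (y^2 - 1) * u) = 2 * (X / (2*y^2 - 1 - 1) * u)"
    if "y > 1" for X y u :: real
  proof -
    have "sqrt (y^2-1) > 0" "(sqrt (y^2-1))^2 = y^2 - 1" using that by (simp_all add: one_less_power less_imp_le)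
    then show ?thesis using that by (simp add: field_simps power2_eq_square)
  qed
  show ?thesis unfolding t1 t2[OF y(2)] t2[OF y(3)] c2_def[symmetric] c3_def[symmetric]
    by (simp add: c2_def c3_def algebra_simps)
qed

lemma vector3_axis: "(vector [a, b, c] :: real^3) = a *\<^sub>R axis 1 (1::real) + b *\<^sub>R axis 2 1 + c *\<^sub>R axis 3 (1::real)"
  by (rule vec3_eqI) (simp_all add: axis_def)

lemma inner3: "(x::real^3) \<bullet> y = x$1 * y$1 + x$2 * y$2 + x$3 * y$3"
  by (simp add: inner_vec_def sum_3)

definition Jf :: "real \<Rightarrow> real \<Rightarrow> real \<Rightarrow> real \<Rightarrow> real \<Rightarrow> real \<Rightarrow> real" where
  "Jf a b c da db dc = (sinh a * da - (cosh c + cosh a * cosh b) / sinh b * db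
          - (cosh b + cosh a * cosh c) / sinh c * dc)
         / sqrt ((cosh a)^2 + (cosh b)^2 + (cosh c)^2 + 2 * cosh a * cosh b * cosh c - 1)"

lemma Jf_simp:
  assumes y: "ya > 1" "yb > 1" "yc > 1"
    and ch: "cosh A = 2*ya^2 - 1" "cosh B = 2*yb^2 - 1" "cosh C = 2*yc^2 - 1"
    and sh: "sinh A = 2 * sqrt (ya^2 - 1) * ya" "sinh B = 2 * sqrt (yb^2 - 1) * yb" "sinh C = 2 * sqrt (yc^2 - 1) * yc"
  shows "Jf A B C (2 * ya / sqrt (ya^2 - 1) * ua) (2 * yb / sqrt (yb^2 - 1) * ub) (2 * yc / sqrt (yc^2 - 1) * uc)
    = 2 * (((2*ya^2 - 1)+1)*ua - ((2*yc^2 - 1) + (2*ya^2 - 1)*(2*yb^2 - 1))/((2*yb^2 - 1)-1)*ub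
         - ((2*yb^2 - 1) + (2*ya^2 - 1)*(2*yc^2 - 1))/((2*yc^2 - 1)-1)*uc)
      / sqrt ((2*ya^2 - 1)^2 + (2*yb^2 - 1)^2 + (2*yc^2 - 1)^2 + 2*(2*ya^2 - 1)*(2*yb^2 - 1)*(2*yc^2 - 1) - 1)"
  unfolding Jf_def ch sh using comp_simp[OF y, of ua ub uc] by simp

theorem lemma3:
  fixes l0jk l0ki l0ij :: real and w :: "real^3"
  assumes "l0jk > 0" and "l0ki > 0" and "l0ij > 0"
    and "w \<in> W_set l0jk l0ki l0ij"
  shows "\<exists>J. (theta_map l0jk l0ki l0ij has_derivative J) (at w) \<and>
             (\<forall>x. x \<noteq> 0 \<longrightarrow> x \<bullet> J x < 0)"
proof -
  define W where "W = W_set l0jk l0ki l0ij"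
  have wW: "w \<in> W" using assms(4) by (simp add: W_def)
  have oW: "open W"
    unfolding W_def W_set_def
    by (intro open_Collect_conj open_Collect_less continuous_intros)
  define L1 where "L1 x = new_len l0jk (x$2) (x$3)" for x :: "real^3"
  define L2 where "L2 x = new_len l0ki (x$3) (x$1)" for x :: "real^3"
  define L3 where "L3 x = new_len l0ij (x$1) (x$2)" for x :: "real^3"
  define G :: "real^3 \<Rightarrow> real^3" where "G x = vector [Fh (L1 x) (L2 x) (L3 x), Fh (L2 x) (L3 x) (L1 x), Fh (L3 x) (L1 x) (L2 x)]"
    for x :: "real^3"
  have eqG: "G x = theta_map l0jk l0ki l0ij x" if "x \<in> W" for x
  proof -
    have p: "L1 x > 0" "L2 x > 0" "L3 x > 0" using that
      by (simp_all add: W_def W_set_def L1_def L2_def L3_def new_len_pos)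
    show ?thesis unfolding theta_map_def G_def Let_def L1_def[symmetric] L2_def[symmetric] L3_def[symmetric]
      using hex_opposite_eq[OF p] by simp
  qed
  define y1 where "y1 = exp (w$2 + w$3) * cosh (l0jk/2)"
  define y2 where "y2 = exp (w$3 + w$1) * cosh (l0ki/2)"
  define y3 where "y3 = exp (w$1 + w$2) * cosh (l0ij/2)"
  have y: "y1 > 1" "y2 > 1" "y3 > 1" using wW by (simp_all add: W_def W_set_def y1_def y2_def y3_def)
  define D1 where "D1 h = (2 * y1 / sqrt (y1^2 - 1)) * (h$2 + h$3)" for h :: "real^3"
  define D2 where "D2 h = (2 * y2 / sqrt (y2^2 - 1)) * (h$3 + h$1)" for h :: "real^3"
  define D3 where "D3 h = (2 * y3 / sqrt (y3^2 - 1)) * (h$1 + h$2)" for h :: "real^3"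
  have dL1: "(L1 has_derivative D1) (at w)"
    using dnl[of w 2 3 l0jk] y(1) unfolding L1_def[abs_def] D1_def[abs_def] y1_def by simp
  have dL2: "(L2 has_derivative D2) (at w)"
    using dnl[of w 3 1 l0ki] y(2) unfolding L2_def[abs_def] D2_def[abs_def] y2_def by simp
  have dL3: "(L3 has_derivative D3) (at w)"
    using dnl[of w 1 2 l0ij] y(3) unfolding L3_def[abs_def] D3_def[abs_def] y3_def by simp
  have pw: "L1 w > 0" "L2 w > 0" "L3 w > 0" using wW
    by (simp_all add: W_def W_set_def L1_def L2_def L3_def new_len_pos)
  note F1 = dFh[OF dL1 dL2 dL3 pw(1,2,3)]
  note F2 = dFh[OF dL2 dL3 dL1 pw(2,3,1)]
  note F3 = dFh[OF dL3 dL1 dL2 pw(3,1,2)]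
  define J :: "real^3 \<Rightarrow> real^3" where "J h = vector [Jf (L1 w) (L2 w) (L3 w) (D1 h) (D2 h) (D3 h),
      Jf (L2 w) (L3 w) (L1 w) (D2 h) (D3 h) (D1 h), Jf (L3 w) (L1 w) (L2 w) (D3 h) (D1 h) (D2 h)]" for h
  have dG: "(G has_derivative J) (at w)"
  proof -
    have "((\<lambda>x. Fh (L1 x) (L2 x) (L3 x) *\<^sub>R axis 1 (1::real) + Fh (L2 x) (L3 x) (L1 x) *\<^sub>R axis 2 1
        + Fh (L3 x) (L1 x) (L2 x) *\<^sub>R axis 3 1) has_derivative
        (\<lambda>h. Jf (L1 w) (L2 w) (L3 w) (D1 h) (D2 h) (D3 h) *\<^sub>R axis 1 (1::real)
           + Jf (L2 w) (L3 w) (L1 w) (D2 h) (D3 h) (D1 h) *\<^sub>R axis 2 1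
           + Jf (L3 w) (L1 w) (L2 w) (D3 h) (D1 h) (D2 h) *\<^sub>R axis 3 1)) (at w)"
      unfolding Jf_def by (intro has_derivative_add has_derivative_scaleR_left F1 F2 F3)
    then show ?thesis unfolding G_def[abs_def] J_def[abs_def] vector3_axis .
  qed
  have dT: "(theta_map l0jk l0ki l0ij has_derivative J) (at w)"
    by (rule has_derivative_transform_within_open[OF dG oW wW eqG])
  show ?thesis
  proof (intro exI conjI allI impI)
    show "(theta_map l0jk l0ki l0ij has_derivative J) (at w)" by (rule dT)
    fix x :: "real^3" assume "x \<noteq> 0"
    then have nz: "x$1 \<noteq> 0 \<or> x$2 \<noteq> 0 \<or> x$3 \<noteq> 0" using vec3_eqI[of x 0] by auto
    have ch: "cosh (L1 w) = 2*y1^2 - 1" "cosh (L2 w) = 2*y2^2 - 1" "cosh (L3 w) = 2*y3^2 - 1"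
      using y unfolding L1_def L2_def L3_def y1_def y2_def y3_def by (simp_all add: cosh_new_len)
    have sh: "sinh (L1 w) = 2 * sqrt (y1^2 - 1) * y1" "sinh (L2 w) = 2 * sqrt (y2^2 - 1) * y2"
      "sinh (L3 w) = 2 * sqrt (y3^2 - 1) * y3"
      using y unfolding L1_def L2_def L3_def y1_def y2_def y3_def by (simp_all add: sinh_new_len)
    define c1 where "c1 = 2*y1^2 - 1"
    define c2 where "c2 = 2*y2^2 - 1"
    define c3 where "c3 = 2*y3^2 - 1"
    define x1 where "x1 = x$1"
    define x2 where "x2 = x$2"
    define x3 where "x3 = x$3"
    have c: "c1 > 1" "c2 > 1" "c3 > 1" using y unfolding c1_def c2_def c3_def
      by (simp_all add: one_less_power)
    define \<Delta> where "\<Delta> = sqrt (c1^2 + c2^2 + c3^2 + 2*c1*c2*c3 - 1)"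
    have Dp: "\<Delta> > 0"
    proof -
      have "c1^2 > 1" "c1*c2*c3 > 0" using c by (simp_all add: one_less_power)
      then have "c1^2 + c2^2 + c3^2 + 2*c1*c2*c3 - 1 > 0"
        using zero_le_power2[of c2] zero_le_power2[of c3] by linarith
      then show ?thesis unfolding \<Delta>_def by simp
    qed
    have j1: "(J x)$1 = 2 * ((c1+1)*(x2+x3) - (c3+c1*c2)/(c2-1)*(x3+x1) - (c2+c1*c3)/(c3-1)*(x1+x2)) / \<Delta>"
      using Jf_simp[OF y(1) y(2) y(3) ch(1) ch(2) ch(3) sh(1) sh(2) sh(3), of "x$2+x$3" "x$3+x$1" "x$1+x$2"]
      unfolding c1_def[symmetric] c2_def[symmetric] c3_def[symmetric]
      by (simp add: J_def D1_def D2_def D3_def \<Delta>_def x1_def x2_def x3_def)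
    have j2: "(J x)$2 = 2 * ((c2+1)*(x3+x1) - (c1+c2*c3)/(c3-1)*(x1+x2) - (c3+c2*c1)/(c1-1)*(x2+x3)) / \<Delta>"
    proof -
      have "c2^2 + c3^2 + c1^2 + 2*c2*c3*c1 - 1 = c1^2 + c2^2 + c3^2 + 2*c1*c2*c3 - 1" by simp
      then show ?thesis
        using Jf_simp[OF y(2) y(3) y(1) ch(2) ch(3) ch(1) sh(2) sh(3) sh(1), of "x$3+x$1" "x$1+x$2" "x$2+x$3"]
        unfolding c1_def[symmetric] c2_def[symmetric] c3_def[symmetric]
        by (simp add: J_def D1_def D2_def D3_def \<Delta>_def x1_def x2_def x3_def)
    qed
    have j3: "(J x)$3 = 2 * ((c3+1)*(x1+x2) - (c2+c3*c1)/(c1-1)*(x2+x3) - (c1+c3*c2)/(c2-1)*(x3+x1)) / \<Delta>"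
    proof -
      have "c3^2 + c1^2 + c2^2 + 2*c3*c1*c2 - 1 = c1^2 + c2^2 + c3^2 + 2*c1*c2*c3 - 1" by simp
      then show ?thesis
        using Jf_simp[OF y(3) y(1) y(2) ch(3) ch(1) ch(2) sh(3) sh(1) sh(2), of "x$1+x$2" "x$2+x$3" "x$3+x$1"]
        unfolding c1_def[symmetric] c2_def[symmetric] c3_def[symmetric]
        by (simp add: J_def D1_def D2_def D3_def \<Delta>_def x1_def x2_def x3_def)
    qed
    have nz': "x1 \<noteq> 0 \<or> x2 \<noteq> 0 \<or> x3 \<noteq> 0" using nz by (simp add: x1_def x2_def x3_def)
    note mi = main_ineq[OF c nz']
    have "x \<bullet> J x = (2 / \<Delta>) * (x1 * ((c1+1)*(x2+x3) - (c3+c1*c2)/(c2-1)*(x3+x1) - (c2+c1*c3)/(c3-1)*(x1+x2))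
       + x2 * ((c2+1)*(x3+x1) - (c1+c2*c3)/(c3-1)*(x1+x2) - (c3+c2*c1)/(c1-1)*(x2+x3))
       + x3 * ((c3+1)*(x1+x2) - (c2+c3*c1)/(c1-1)*(x2+x3) - (c1+c3*c2)/(c2-1)*(x3+x1)))"
    proof -
      have gen: "x1*(2*r1/\<Delta>) + x2*(2*r2/\<Delta>) + x3*(2*r3/\<Delta>) = (2/\<Delta>)*(x1*r1 + x2*r2 + x3*r3)" for r1 r2 r3
        by (simp add: divide_simps distrib_left)
      show ?thesis unfolding inner3 j1 j2 j3 x1_def[symmetric] x2_def[symmetric] x3_def[symmetric]
        by (rule gen)
    qed
    also have "\<dots> < 0" by (rule mult_pos_neg[OF _ mi]) (use Dp in simp)
    finally show "x \<bullet> J x < 0" .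
  qed
qed

end
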